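(* In the standing setting, for all $m,n\in\mathbb{N}\cup\{0\}$ one has $\overline{E_mE_n}=E_{m+n}$, where $E_mE_n=\{\alpha\beta:\alpha\in E_m,\beta\in E_n\}$ and the closure is in operator norm. In particular each $E_n$ is contained in $C^*(\rho)$.
   Context: $R$ rational of degree $\ge2$, $X$ its Julia set, Fatou set, or the Riemann sphere, $X\ne\emptyset$; $R^{\circ n}$ the $n$-th iterate ($R^{\circ0}=\mathrm{id}$). $X^\circ$ is the complement in $X$ of the grand orbit (under $x\sim y\iff R^{\circ m}(x)=R^{\circ n}(y)$ for some $m,n\ge0$) of all fixed points and branch points of the iterates $R^{\circ n}|_X$, $n\ge1$ (dense, completely invariant). $(e_x)$ is the standard basis of $\ell^2(X^\circ)$. For $n\ge0$, $\rho_n:C_0(X)\to B(\ell^2(X^\circ))$ is $\rho_n(f)e_y=\sum_{x\in X^\circ,\,R^{\circ n}(x)=y}f(x)e_x$, and $E_n=\rho_n(C_0(X))$. $\rho_A=\rho_0$, $\rho_E=\rho_1$ and $C^*(\rho)$ is the C*-algebra generated by $E_0\cup E_1$. *)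

theory Defs
  imports "HOL-Analysis.Analysis" "HOL-Computational_Algebra.Polynomial"
begin

section \<open>The Riemann sphere, realised as the unit sphere in R x C (chordal metric)\<close>

type_synonym pt = "real \<times> complex"

definition S2 :: "pt set" where
  "S2 = sphere 0 1"

definition NP :: pt where   \<comment> \<open>north pole = infinity\<close>
  "NP = (1, 0)"

definition stereo_inv :: "complex \<Rightarrow> pt" where
  "stereo_inv w = (((cmod w)^2 - 1) / ((cmod w)^2 + 1),
                   complex_of_real (2 / ((cmod w)^2 + 1)) * w)"

definition stereo :: "pt \<Rightarrow> complex" where
  "stereo P = snd P / complex_of_real (1 - fst P)"

definition ratmap :: "complex poly \<Rightarrow> complex poly \<Rightarrow> pt \<Rightarrow> pt" where
  "ratmap p q P =
     (if P = NP then
        (if degree p > degree q then NP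
         else if degree p = degree q then stereo_inv (lead_coeff p / lead_coeff q)
         else stereo_inv 0)
      else (let w = stereo P in
            if poly q w = 0 then NP else stereo_inv (poly p w / poly q w)))"

definition normal_family :: "pt set \<Rightarrow> (nat \<Rightarrow> pt \<Rightarrow> pt) \<Rightarrow> bool" where
  "normal_family U F \<longleftrightarrow>
     (\<forall>k :: nat \<Rightarrow> nat. \<exists>r g. strict_mono r \<and>
        (\<forall>K. compact K \<and> K \<subseteq> U \<longrightarrow> uniform_limit K (\<lambda>j. F (k (r j))) g sequentially))"

definition fatou :: "(pt \<Rightarrow> pt) \<Rightarrow> pt set" where
  "fatou R = {x \<in> S2. \<exists>U. openin (top_of_set S2) U \<and> x \<in> U \<and> normal_family U (\<lambda>n. R ^^ n)}"

definition julia :: "(pt \<Rightarrow> pt) \<Rightarrow> pt set" where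
  "julia R = S2 - fatou R"

definition fixed_pts :: "(pt \<Rightarrow> pt) \<Rightarrow> pt set \<Rightarrow> pt set" where
  "fixed_pts R X = {x \<in> X. \<exists>n\<ge>1. (R ^^ n) x = x}"

definition branch_pts :: "(pt \<Rightarrow> pt) \<Rightarrow> pt set \<Rightarrow> pt set" where
  "branch_pts R X = {x \<in> X. \<exists>n\<ge>1.
      \<not> (\<exists>U. openin (top_of_set X) U \<and> x \<in> U \<and> inj_on (R ^^ n) U)}"

definition Xcirc :: "(pt \<Rightarrow> pt) \<Rightarrow> pt set \<Rightarrow> pt set" where
  "Xcirc R X = {x \<in> X. \<not> (\<exists>y \<in> fixed_pts R X \<union> branch_pts R X.
                               \<exists>m n. (R ^^ m) x = (R ^^ n) y)}"

definition l2 :: "pt set \<Rightarrow> (pt \<Rightarrow> complex) set" where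
  "l2 X0 = {\<xi>. (\<forall>x. x \<notin> X0 \<longrightarrow> \<xi> x = 0) \<and> (\<lambda>x. (cmod (\<xi> x))^2) summable_on X0}"

definition nrm :: "pt set \<Rightarrow> (pt \<Rightarrow> complex) \<Rightarrow> real" where
  "nrm X0 \<xi> = sqrt (infsum (\<lambda>x. (cmod (\<xi> x))^2) X0)"

definition inprod :: "pt set \<Rightarrow> (pt \<Rightarrow> complex) \<Rightarrow> (pt \<Rightarrow> complex) \<Rightarrow> complex" where
  "inprod X0 \<xi> \<eta> = infsum (\<lambda>x. \<xi> x * cnj (\<eta> x)) X0"

type_synonym op = "(pt \<Rightarrow> complex) \<Rightarrow> (pt \<Rightarrow> complex)"

text \<open>B(l2(X0)): bounded linear operators, normalised to be 0 outside l2(X0).\<close>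
definition bops :: "pt set \<Rightarrow> op set" where
  "bops X0 = {T. (\<forall>\<xi>. \<xi> \<notin> l2 X0 \<longrightarrow> T \<xi> = (\<lambda>x. 0)) \<and>
                 (\<forall>\<xi>\<in>l2 X0. T \<xi> \<in> l2 X0) \<and>
                 (\<forall>\<xi>\<in>l2 X0. \<forall>\<eta>\<in>l2 X0. T (\<lambda>x. \<xi> x + \<eta> x) = (\<lambda>x. T \<xi> x + T \<eta> x)) \<and>
                 (\<forall>c. \<forall>\<xi>\<in>l2 X0. T (\<lambda>x. c * \<xi> x) = (\<lambda>x. c * T \<xi> x)) \<and>
                 (\<exists>C. \<forall>\<xi>\<in>l2 X0. nrm X0 (T \<xi>) \<le> C * nrm X0 \<xi>)}"

definition opnorm :: "pt set \<Rightarrow> op \<Rightarrow> real" where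
  "opnorm X0 T = Sup {nrm X0 (T \<xi>) | \<xi>. \<xi> \<in> l2 X0 \<and> nrm X0 \<xi> \<le> 1}"

definition op_closure :: "pt set \<Rightarrow> op set \<Rightarrow> op set" where
  "op_closure X0 S = {T \<in> bops X0. \<forall>\<epsilon>>0. \<exists>A\<in>S. opnorm X0 (\<lambda>\<xi> x. T \<xi> x - A \<xi> x) < \<epsilon>}"

definition is_adjoint :: "pt set \<Rightarrow> op \<Rightarrow> op \<Rightarrow> bool" where
  "is_adjoint X0 T S \<longleftrightarrow>
     (\<forall>\<xi>\<in>l2 X0. \<forall>\<eta>\<in>l2 X0. inprod X0 (T \<xi>) \<eta> = inprod X0 \<xi> (S \<eta>))"

definition cstar_gen :: "pt set \<Rightarrow> op set \<Rightarrow> op set" where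
  "cstar_gen X0 G = \<Inter>{A. A \<subseteq> bops X0 \<and> G \<subseteq> A \<and>
       (\<forall>T\<in>A. \<forall>S\<in>A. (\<lambda>\<xi> x. T \<xi> x + S \<xi> x) \<in> A) \<and>
       (\<forall>c. \<forall>T\<in>A. (\<lambda>\<xi> x. c * T \<xi> x) \<in> A) \<and>
       (\<forall>T\<in>A. \<forall>S\<in>A. T \<circ> S \<in> A) \<and>
       (\<forall>T\<in>A. \<exists>S\<in>A. is_adjoint X0 T S) \<and>
       op_closure X0 A \<subseteq> A}"

definition C0 :: "pt set \<Rightarrow> (pt \<Rightarrow> complex) set" where
  "C0 X = {f. continuous_on X f \<and>
              (\<forall>\<epsilon>>0. \<exists>K. compact K \<and> K \<subseteq> X \<and> (\<forall>x\<in>X - K. cmod (f x) < \<epsilon>))}"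

text \<open>rho_n(f) e_y = sum over x in X0 with R^n x = y of f(x) e_x, i.e.
  (rho_n(f) xi)(x) = f(x) xi(R^n x) for x in X0.\<close>
definition rho :: "(pt \<Rightarrow> pt) \<Rightarrow> pt set \<Rightarrow> nat \<Rightarrow> (pt \<Rightarrow> complex) \<Rightarrow> op" where
  "rho R X n f = (\<lambda>\<xi>. if \<xi> \<in> l2 (Xcirc R X)
       then (\<lambda>x. if x \<in> Xcirc R X then f x * \<xi> ((R ^^ n) x) else 0)
       else (\<lambda>x. 0))"

definition Eset :: "(pt \<Rightarrow> pt) \<Rightarrow> pt set \<Rightarrow> nat \<Rightarrow> op set" where
  "Eset R X n = rho R X n ` C0 X"

definition prodset :: "op set \<Rightarrow> op set \<Rightarrow> op set" where
  "prodset A B = {\<alpha> \<circ> \<beta> | \<alpha> \<beta>. \<alpha> \<in> A \<and> \<beta> \<in> B}"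

definition Cstar_rho :: "(pt \<Rightarrow> pt) \<Rightarrow> pt set \<Rightarrow> op set" where
  "Cstar_rho R X = cstar_gen (Xcirc R X) (Eset R X 0 \<union> Eset R X 1)"

end

theory Submission
  imports Defs "HOL-Complex_Analysis.Complex_Analysis"
begin

definition sig :: "pt \<Rightarrow> pt" where "sig P = (- fst P, cnj (snd P))"
definition SP :: pt where "SP = (-1, 0)"

lemma S2_iff: "P \<in> S2 \<longleftrightarrow> (fst P)^2 + (cmod (snd P))^2 = 1"
proof -
  have "P \<in> S2 \<longleftrightarrow> norm P = 1" by (simp add: S2_def)
  also have "\<dots> \<longleftrightarrow> (norm P)^2 = 1" using norm_ge_zero[of P] by (smt (verit) power2_eq_1_iff)
  also have "(norm P)^2 = (fst P)^2 + (cmod (snd P))^2"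
    by (cases P) (simp add: norm_Pair)
  finally show ?thesis .
qed

lemma aux_sq: "(s::real) \<ge> 0 \<Longrightarrow> ((s-1)/(s+1))^2 + (2/(s+1))^2 * s = 1"
proof -
  assume s: "s \<ge> 0"
  then have d: "(s+1)^2 \<noteq> 0" by simp
  have "((s-1)/(s+1))^2 + (2/(s+1))^2 * s = ((s - 1)^2 + 4 * s) / ((s+1)^2)"
    by (simp add: power_divide add_divide_distrib)
  also have "(s-1)^2 + 4 * s = (s+1)^2" by algebra
  finally show ?thesis using d by simp
qed

lemma stereo_inv_S2: "stereo_inv w \<in> S2"
proof -
  define s where "s = (cmod w)^2"
  have s0: "s \<ge> 0" by (simp add: s_def)
  have "s + 1 > 0" using s0 by simp
  have n: "(cmod (complex_of_real (2 / (s + 1)) * w))^2 = (2/(s+1))^2 * s"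
    unfolding s_def by (simp only: norm_mult norm_of_real power_mult_distrib power2_abs)
  show ?thesis unfolding S2_iff stereo_inv_def fst_conv snd_conv s_def[symmetric] n
    using aux_sq[OF s0] .
qed

lemma stereo_inv_neq_NP: "stereo_inv w \<noteq> NP"
  by (simp add: stereo_inv_def NP_def divide_eq_1_iff)

lemma stereo_stereo_inv: "stereo (stereo_inv w) = w"
proof -
  define s where "s = (cmod w)^2"
  have s0: "s + 1 > 0" by (simp add: s_def add_nonneg_pos)
  have h: "1 - (s - 1) / (s + 1) = 2 / (s + 1)" using s0 by (simp add: field_simps)
  have c: "2 / (s+1) \<noteq> 0" using s0 by simp
  show ?thesis unfolding stereo_def stereo_inv_def fst_conv snd_conv s_def[symmetric] h
    using c by (metis nonzero_mult_div_cancel_left of_real_eq_0_iff)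
qed

lemma NP_S2: "NP \<in> S2" by (simp add: S2_iff NP_def)
lemma SP_S2: "SP \<in> S2" by (simp add: S2_iff SP_def)
lemma NP_neq_SP: "NP \<noteq> SP" by (simp add: NP_def SP_def)

lemma stereo_inv_stereo:
  assumes "P \<in> S2" "P \<noteq> NP" shows "stereo_inv (stereo P) = P"
proof -
  obtain a z where P: "P = (a, z)" by (cases P)
  have e: "a^2 + (cmod z)^2 = 1" using assms(1) by (simp add: S2_iff P)
  have a1: "a \<noteq> 1"
  proof
    assume "a = 1" then have "z = 0" using e by simp
    then show False using assms(2) \<open>a = 1\<close> by (simp add: P NP_def)
  qed
  have a1': "1 - a \<noteq> 0" using a1 by simp
  have am: "a \<le> 1" proof (rule ccontr)
    assume "\<not> a \<le> 1" then have "1 < a^2" by (simp add: one_less_power)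
    then show False using e by (smt (verit) zero_le_power2)
  qed
  then have pos: "1 - a > 0" using a1 by simp
  let ?w = "z / complex_of_real (1 - a)"
  have nw: "(cmod ?w)^2 = (1 + a) / (1 - a)"
  proof -
    have "cmod (complex_of_real (1 - a)) = 1 - a" using pos by (simp only: norm_of_real)
    then have "(cmod ?w)^2 = (cmod z)^2 / (1 - a)^2" by (simp add: norm_divide power_divide del: of_real_diff)
    also have "\<dots> = (1 - a^2) / (1-a)^2" using e by simp
    also have "\<dots> = (1 + a) / (1 - a)"
    proof -
      have "1 - a^2 = (1+a)*(1-a)" by algebra
      then have "(1 - a^2)/(1-a)^2 = ((1+a)*(1-a))/((1-a)*(1-a))" by (simp add: power2_eq_square)
      then show ?thesis using a1' by simp
    qed
    finally show ?thesis .
  qed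
  have n1: "(cmod ?w)^2 + 1 = 2 / (1 - a)" using nw a1' by (simp add: field_simps)
  have n2: "(cmod ?w)^2 - 1 = 2 * a / (1 - a)" using nw a1' by (simp add: field_simps)
  have c1: "((cmod ?w)^2 - 1) / ((cmod ?w)^2 + 1) = a" unfolding n1 n2 using a1' by simp
  have tt: "2 / (2/(1-a)) = 1 - a" using a1' by simp
  have c2: "complex_of_real (2 / ((cmod ?w)^2 + 1)) * ?w = z" unfolding n1 tt
    using a1' by simp
  show ?thesis using c1 c2 by (simp add: stereo_inv_def stereo_def P)
qed

lemma sig_sig[simp]: "sig (sig P) = P" by (simp add: sig_def)
lemma sig_S2: "P \<in> S2 \<Longrightarrow> sig P \<in> S2" by (simp add: S2_iff sig_def)
lemma sig_NP: "sig NP = SP" and sig_SP: "sig SP = NP" by (simp_all add: sig_def NP_def SP_def)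
lemma stereo_inv_0: "stereo_inv 0 = SP" by (simp add: stereo_inv_def SP_def)

lemma stereo_inv_inverse:
  assumes "w \<noteq> 0" shows "stereo_inv (1 / w) = sig (stereo_inv w)"
proof -
  have r: "cmod w > 0" using assms by simp
  have n: "cmod (1/w) = 1 / cmod w" by (simp add: norm_divide)
  have gen: "(1/x - 1)/(1/x + 1) = -((x - 1)/(x+1))" if x: "x > 0" for x :: real
  proof -
    have "1/x - 1 = (1 - x)/x" "1/x + 1 = (1 + x)/x" using x by (simp_all add: field_simps)
    then have "(1/x - 1)/(1/x + 1) = (1 - x)/(1+x)" using x by simp
    then show ?thesis by (simp add: minus_divide_left add.commute)
  qed
  have e1: "((1 / cmod w)^2 - 1) / ((1 / cmod w)^2 + 1) = - (((cmod w)^2 - 1) / ((cmod w)^2 + 1))"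
    using gen[of "(cmod w)^2"] r by (simp add: power_one_over)
  have e2: "complex_of_real (2 / ((1 / cmod w)^2 + 1)) * (1 / w) = cnj (complex_of_real (2 / ((cmod w)^2 + 1)) * w)"
  proof -
    define A where "A = 2 / ((1 / cmod w)^2 + 1)"
    define B where "B = (cmod w)^2"
    have B0: "B \<noteq> 0" using r by (simp add: B_def)
    have iw: "1/w = cnj w / complex_of_real B"
    proof -
      have "complex_of_real B = w * cnj w" unfolding B_def using complex_norm_square[of w] by simp
      moreover have "cnj w \<noteq> 0" using assms by simp
      ultimately show ?thesis by simp
    qed
    have k: "A / B = 2 / ((cmod w)^2 + 1)"
    proof -
      have "(1 / cmod w)^2 + 1 = (1 + B) / B" using r by (simp add: B_def field_simps power_one_over)
      then show ?thesis using B0 by (simp add: A_def B_def add.commute)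
    qed
    have "complex_of_real A * (1 / w) = complex_of_real A * (cnj w / complex_of_real B)" using iw by simp
    also have "\<dots> = complex_of_real (A / B) * cnj w" by (simp add: of_real_divide)
    also have "\<dots> = cnj (complex_of_real (2 / ((cmod w)^2 + 1)) * w)" unfolding k by simp
    finally show ?thesis by (simp add: A_def)
  qed
  show ?thesis using e1 e2 n by (simp add: stereo_inv_def sig_def)
qed

lemma cont_stereo_inv: "continuous_on UNIV stereo_inv"
proof -
  have nz: "\<forall>x::complex. (cmod x)^2 + 1 \<noteq> 0" by (smt (verit) zero_le_power2)
  show ?thesis unfolding stereo_inv_def using nz
  by (intro continuous_intros) auto
qed


lemma cont_sig: "continuous_on A sig"
  unfolding sig_def by (intro continuous_intros)

lemma isCont_sig: "isCont sig x"
  using cont_sig[of UNIV] continuous_on_eq_continuous_at by blast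

lemma cont_stereo: "continuous_on (S2 - {NP}) stereo"
proof -
  have "\<forall>P\<in>S2 - {NP}. 1 - fst P \<noteq> 0"
  proof
    fix P assume P: "P \<in> S2 - {NP}"
    show "1 - fst P \<noteq> 0"
    proof
      assume "1 - fst P = 0"
      then have "fst P = 1" by simp
      then have "snd P = 0" using P by (simp add: S2_iff)
      then show False using P \<open>fst P = 1\<close> by (cases P) (simp add: NP_def)
    qed
  qed
  then show ?thesis unfolding stereo_def
    by (intro continuous_intros) auto
qed

lemma openin_S2_NP: "openin (top_of_set S2) (S2 - {NP})"
  by (intro openin_delete) simp

lemma openin_S2_SP: "openin (top_of_set S2) (S2 - {SP})"
  by (intro openin_delete) simp

lemma stereo_inv_image: "stereo_inv ` Q = {P \<in> S2 - {NP}. stereo P \<in> Q}"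
proof
  show "stereo_inv ` Q \<subseteq> {P \<in> S2 - {NP}. stereo P \<in> Q}"
  proof
    fix P assume "P \<in> stereo_inv ` Q"
    then obtain w where "w \<in> Q" "P = stereo_inv w" by blast
    then show "P \<in> {P \<in> S2 - {NP}. stereo P \<in> Q}"
      using stereo_inv_S2 stereo_inv_neq_NP stereo_stereo_inv by simp
  qed
  show "{P \<in> S2 - {NP}. stereo P \<in> Q} \<subseteq> stereo_inv ` Q"
  proof
    fix P assume "P \<in> {P \<in> S2 - {NP}. stereo P \<in> Q}"
    then show "P \<in> stereo_inv ` Q" using stereo_inv_stereo[of P]
      by (metis (mono_tags, lifting) DiffD1 DiffD2 insertCI mem_Collect_eq rev_image_eqI)
  qed
qed

lemma openin_stereo_inv: assumes "open Q" shows "openin (top_of_set S2) (stereo_inv ` Q)"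
proof -
  have "openin (top_of_set (S2 - {NP})) ((S2 - {NP}) \<inter> stereo -` Q)"
    by (rule continuous_openin_preimage_gen[OF cont_stereo assms])
  moreover have "(S2 - {NP}) \<inter> stereo -` Q = stereo_inv ` Q"
    unfolding stereo_inv_image by auto
  ultimately show ?thesis using openin_trans openin_S2_NP by metis
qed

lemma open_stereo_inv_preimage:
  assumes "openin (top_of_set S2) V" shows "open {w. stereo_inv w \<in> V}"
proof -
  obtain T where T: "open T" "V = S2 \<inter> T" using assms openin_open by metis
  have "{w. stereo_inv w \<in> V} = stereo_inv -` T" using T stereo_inv_S2 by auto
  moreover have "open (stereo_inv -` T)"
    using continuous_open_vimage[OF T(1)] cont_stereo_inv continuous_on_eq_continuous_at by blast
  ultimately show ?thesis by simp
qed

lemma sig_image_S2: assumes "A \<subseteq> S2" shows "sig ` A = S2 \<inter> sig -` A"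
proof (intro equalityI subsetI)
  fix P assume "P \<in> sig ` A"
  then obtain Q where "Q \<in> A" "P = sig Q" by blast
  moreover have "Q \<in> S2" using assms \<open>Q \<in> A\<close> by blast
  ultimately show "P \<in> S2 \<inter> sig -` A" using sig_S2 by simp
next
  fix P assume "P \<in> S2 \<inter> sig -` A"
  then have "sig P \<in> A" by simp
  then have "sig (sig P) \<in> sig ` A" by blast
  then show "P \<in> sig ` A" by simp
qed

lemma openin_sig: assumes "openin (top_of_set S2) V" shows "openin (top_of_set S2) (sig ` V)"
proof -
  have "V \<subseteq> S2" using assms openin_imp_subset by auto
  obtain T where T: "open T" "V = S2 \<inter> T" using assms openin_open by metis
  have "S2 \<inter> sig -` V = S2 \<inter> sig -` T" using T(2) sig_S2 by auto
  then have "sig ` V = S2 \<inter> sig -` T" using sig_image_S2[OF \<open>V \<subseteq> S2\<close>] by simp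
  then show ?thesis using continuous_openin_preimage_gen[OF cont_sig T(1)] by simp
qed

definition rm :: "complex poly \<Rightarrow> complex poly \<Rightarrow> complex \<Rightarrow> pt" where
  "rm a b w = (if poly b w = 0 then NP else stereo_inv (poly a w / poly b w))"

lemma rm_S2: "rm a b w \<in> S2"
  by (simp add: rm_def NP_S2 stereo_inv_S2)

lemma rm_alt:
  assumes "poly a w \<noteq> 0" shows "rm a b w = sig (stereo_inv (poly b w / poly a w))"
proof (cases "poly b w = 0")
  case True then show ?thesis by (simp add: rm_def stereo_inv_0 sig_SP)
next
  case False
  have "poly a w / poly b w = 1 / (poly b w / poly a w)" by simp
  then show ?thesis using False assms stereo_inv_inverse[of "poly b w / poly a w"]
    by (simp add: rm_def)
qed

lemma open_poly_nz: "open {w. poly (b::complex poly) w \<noteq> 0}"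
proof -
  have "open (poly b -` (-{0}))"
    by (rule continuous_open_vimage) (auto intro: poly_isCont)
  moreover have "poly b -` (-{0}) = {w. poly b w \<noteq> 0}" by auto
  ultimately show ?thesis by simp
qed

lemma ev_poly_nz: "poly (b::complex poly) w0 \<noteq> 0 \<Longrightarrow> eventually (\<lambda>w. poly b w \<noteq> 0) (nhds w0)"
  using eventually_nhds_in_open[OF open_poly_nz[of b], of w0] by simp

lemma ball_nonzero:
  fixes b :: "complex poly"
  assumes "poly b w0 \<noteq> 0" shows "\<exists>e>0. \<forall>w\<in>ball w0 e. poly b w \<noteq> 0"
  using open_poly_nz[of b] assms unfolding open_contains_ball by (auto simp: subset_eq)

lemma rm_cont:
  assumes "\<not> (poly a w0 = 0 \<and> poly b w0 = 0)" shows "isCont (rm a b) w0"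
proof (cases "poly b w0 = 0")
  case False
  have ev: "eventually (\<lambda>w. poly b w \<noteq> 0) (nhds w0)"
    using ev_poly_nz[OF False] .
  have "eventually (\<lambda>w. rm a b w = stereo_inv (poly a w / poly b w)) (nhds w0)"
    using ev by eventually_elim (simp add: rm_def)
  moreover have "isCont (\<lambda>w. stereo_inv (poly a w / poly b w)) w0"
  proof (rule isCont_o2[where f = "\<lambda>w. poly a w / poly b w"])
    show "isCont (\<lambda>w. poly a w / poly b w) w0" using False by (intro continuous_intros) auto
    show "isCont stereo_inv (poly a w0 / poly b w0)"
      using cont_stereo_inv continuous_on_eq_continuous_at by blast
  qed
  ultimately show ?thesis by (subst isCont_cong)
next
  case True
  then have a0: "poly a w0 \<noteq> 0" using assms by auto
  have ev: "eventually (\<lambda>w. poly a w \<noteq> 0) (nhds w0)"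
    using ev_poly_nz[OF a0] .
  have "eventually (\<lambda>w. rm a b w = sig (stereo_inv (poly b w / poly a w))) (nhds w0)"
    using ev by eventually_elim (simp add: rm_alt)
  moreover have "isCont (\<lambda>w. sig (stereo_inv (poly b w / poly a w))) w0"
  proof (rule isCont_o2[where f = "\<lambda>w. stereo_inv (poly b w / poly a w)"])
    show "isCont sig (stereo_inv (poly b w0 / poly a w0))" by (rule isCont_sig)
    show "isCont (\<lambda>w. stereo_inv (poly b w / poly a w)) w0"
    proof (rule isCont_o2[where f = "\<lambda>w. poly b w / poly a w"])
      show "isCont (\<lambda>w. poly b w / poly a w) w0" using a0 by (intro continuous_intros) auto
      show "isCont stereo_inv (poly b w0 / poly a w0)"
        using cont_stereo_inv continuous_on_eq_continuous_at by blast
    qed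
  qed
  ultimately show ?thesis by (subst isCont_cong)
qed

lemma poly_zero_on_ball:
  fixes f :: "complex poly"
  assumes "e > 0" "\<forall>w\<in>ball w0 e. poly f w = 0" shows "f = 0"
proof (rule ccontr)
  assume "f \<noteq> 0"
  then have "finite {x. poly f x = 0}" by (rule poly_roots_finite)
  moreover have "ball w0 e \<subseteq> {x. poly f x = 0}" using assms by auto
  moreover have "infinite (UNIV \<inter> ball w0 e)"
    using islimpt_eq_infinite_ball[of w0 UNIV] islimpt_UNIV assms(1) by blast
  ultimately show False by (metis finite_subset inf_top_left)
qed

lemma nonconst_quot:
  fixes a b :: "complex poly"
  assumes nc: "\<forall>c. a \<noteq> smult c b" and e: "e > 0" and bnz: "\<forall>w\<in>ball w0 e. poly b w \<noteq> 0"
  shows "\<not> (\<lambda>w. poly a w / poly b w) constant_on ball w0 e"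
proof
  assume "(\<lambda>w. poly a w / poly b w) constant_on ball w0 e"
  then obtain c where c: "\<forall>w\<in>ball w0 e. poly a w / poly b w = c" unfolding constant_on_def by blast
  have "\<forall>w\<in>ball w0 e. poly (a - smult c b) w = 0"
    using c bnz by (auto simp: field_simps)
  then have "a - smult c b = 0" using poly_zero_on_ball e by blast
  then show False using nc by simp
qed


lemma rm_open:
  fixes a b :: "complex poly"
  assumes nc1: "\<forall>c. a \<noteq> smult c b" and nc2: "\<forall>c. b \<noteq> smult c a"
    and nz: "\<not> (poly a w0 = 0 \<and> poly b w0 = 0)" and Q: "open Q" "w0 \<in> Q"
  shows "\<exists>N. open N \<and> w0 \<in> N \<and> N \<subseteq> Q \<and> openin (top_of_set S2) (rm a b ` N)"
proof (cases "poly b w0 = 0")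
  case False
  obtain e where e: "e > 0" "\<forall>w\<in>ball w0 e. poly b w \<noteq> 0" using ball_nonzero[OF False] by blast
  define N where "N = Q \<inter> ball w0 e"
  have N: "open N" "w0 \<in> N" "N \<subseteq> Q" "N \<subseteq> ball w0 e" using Q e by (auto simp: N_def)
  have hol: "(\<lambda>w. poly a w / poly b w) holomorphic_on ball w0 e"
    using e by (intro holomorphic_intros) auto
  have op: "open ((\<lambda>w. poly a w / poly b w) ` N)"
    by (rule open_mapping_thm[OF hol open_ball connected_ball N(1) N(4) nonconst_quot[OF nc1 e]])
  have "rm a b ` N = stereo_inv ` ((\<lambda>w. poly a w / poly b w) ` N)"
    using N(4) e(2) by (auto simp: rm_def image_image intro!: image_cong)
  then show ?thesis using N openin_stereo_inv[OF op] by metis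
next
  case True
  then have a0: "poly a w0 \<noteq> 0" using nz by auto
  obtain e where e: "e > 0" "\<forall>w\<in>ball w0 e. poly a w \<noteq> 0" using ball_nonzero[OF a0] by blast
  define N where "N = Q \<inter> ball w0 e"
  have N: "open N" "w0 \<in> N" "N \<subseteq> Q" "N \<subseteq> ball w0 e" using Q e by (auto simp: N_def)
  have hol: "(\<lambda>w. poly b w / poly a w) holomorphic_on ball w0 e"
    using e by (intro holomorphic_intros) auto
  have op: "open ((\<lambda>w. poly b w / poly a w) ` N)"
    by (rule open_mapping_thm[OF hol open_ball connected_ball N(1) N(4) nonconst_quot[OF nc2 e]])
  have "rm a b ` N = sig ` stereo_inv ` ((\<lambda>w. poly b w / poly a w) ` N)"
    using N(4) e(2) by (auto simp: rm_alt image_image intro!: image_cong)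
  then show ?thesis using N openin_sig[OF openin_stereo_inv[OF op]] by metis
qed


locale ratl =
  fixes p q :: "complex poly"
  assumes cop: "coprime p q" and deg: "max (degree p) (degree q) \<ge> 2"
begin

abbreviation "R \<equiv> ratmap p q"
definition "d = max (degree p) (degree q)"
definition "a = monom 1 (d - degree p) * reflect_poly p"
definition "b = monom 1 (d - degree q) * reflect_poly q"

lemma unit_deg0: "is_unit (u::complex poly) \<Longrightarrow> degree u = 0"
  by (metis is_unit_iff_degree not_is_unit_0)

lemma p_nz: "p \<noteq> 0"
proof
  assume "p = 0"
  then have "is_unit q" using cop by simp
  then show False using deg \<open>p = 0\<close> unit_deg0 by simp
qed

lemma q_nz: "q \<noteq> 0"
proof
  assume "q = 0"
  then have "is_unit p" using cop by simp
  then show False using deg \<open>q = 0\<close> unit_deg0 by simp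
qed

lemma no_common: "\<not> (poly p w = 0 \<and> poly q w = 0)"
proof
  assume "poly p w = 0 \<and> poly q w = 0"
  then have "[:-w, 1:] dvd p" "[:-w, 1:] dvd q" by (simp_all add: poly_eq_0_iff_dvd)
  then have "is_unit [:-w, 1:]" by (rule coprime_common_divisor[OF cop])
  then have "degree [:-w, 1:] = 0" by (rule unit_deg0)
  then show False by simp
qed

lemma nc1: "\<forall>c. p \<noteq> smult c q"
proof
  fix c show "p \<noteq> smult c q"
  proof
    assume h: "p = smult c q"
    then have "q dvd p" using dvd_smult[OF dvd_refl] by simp
    then have "is_unit q" by (rule coprime_common_divisor[OF cop _ dvd_refl])
    then have "degree q = 0" by (rule unit_deg0)
    moreover have "degree p \<le> degree q" using h degree_smult_le by metis
    ultimately show False using deg by simp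
  qed
qed

lemma nc2: "\<forall>c. q \<noteq> smult c p"
proof
  fix c show "q \<noteq> smult c p"
  proof
    assume h: "q = smult c p"
    then have "p dvd q" using dvd_smult[OF dvd_refl] by simp
    then have "is_unit p" by (rule coprime_common_divisor[OF cop dvd_refl])
    then have "degree p = 0" by (rule unit_deg0)
    moreover have "degree q \<le> degree p" using h degree_smult_le by metis
    ultimately show False using deg by simp
  qed
qed

lemma poly_ref:
  fixes f :: "complex poly"
  assumes "degree f \<le> d" "u \<noteq> 0"
  shows "poly (monom 1 (d - degree f) * reflect_poly f) u = u ^ d * poly f (1 / u)"
proof -
  have "poly (monom 1 (d - degree f) * reflect_poly f) u = poly (monom 1 (d - degree f)) u * poly (reflect_poly f) u"
    by (rule poly_mult)
  also have "\<dots> = u ^ (d - degree f) * (u ^ degree f * poly f (inverse u))"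
    by (simp only: poly_monom mult_1 poly_reflect_poly_nz[OF assms(2)])
  also have "\<dots> = u ^ (d - degree f + degree f) * poly f (1 / u)"
    by (simp add: power_add inverse_eq_divide)
  also have "d - degree f + degree f = d" using assms(1) by simp
  finally show ?thesis .
qed

lemma poly_a: "u \<noteq> 0 \<Longrightarrow> poly a u = u ^ d * poly p (1 / u)"
  unfolding a_def by (rule poly_ref) (auto simp: d_def)

lemma poly_b: "u \<noteq> 0 \<Longrightarrow> poly b u = u ^ d * poly q (1 / u)"
  unfolding b_def by (rule poly_ref) (auto simp: d_def)

lemma poly_a0: "poly a 0 = (if degree p = d then lead_coeff p else 0)"
  unfolding a_def using p_nz by (auto simp: poly_monom d_def)

lemma poly_b0: "poly b 0 = (if degree q = d then lead_coeff q else 0)"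
  unfolding b_def using q_nz by (auto simp: poly_monom d_def)

lemma no_common_ab: "\<not> (poly a u = 0 \<and> poly b u = 0)"
proof (cases "u = 0")
  case True
  have "degree p = d \<or> degree q = d" by (auto simp: d_def max_def)
  then show ?thesis
  proof
    assume "degree p = d"
    then have "poly a 0 = lead_coeff p" by (simp add: poly_a0)
    then have "poly a 0 \<noteq> 0" using p_nz by simp
    then show ?thesis using True by simp
  next
    assume "degree q = d"
    then have "poly b 0 = lead_coeff q" by (simp add: poly_b0)
    then have "poly b 0 \<noteq> 0" using q_nz by simp
    then show ?thesis using True by simp
  qed
next
  case False
  then show ?thesis using poly_a poly_b no_common[of "1/u"] by simp
qed

lemma infinite_nz: "infinite (UNIV - {0::complex})"
  by (simp add: infinite_UNIV_char_0)

lemma nca1: "\<forall>c. a \<noteq> smult c b"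
proof
  fix c show "a \<noteq> smult c b"
  proof
    assume h: "a = smult c b"
    have "\<forall>w\<in>UNIV - {0}. poly (p - smult c q) w = 0"
    proof
      fix w :: complex assume "w \<in> UNIV - {0}"
      then have w: "w \<noteq> 0" by simp
      have "poly a (1/w) = c * poly b (1/w)" using h by simp
      then have "(1/w)^d * poly p w = c * ((1/w)^d * poly q w)" using w poly_a poly_b by simp
      then show "poly (p - smult c q) w = 0" using w by simp
    qed
    then have "p - smult c q = 0"
      using poly_roots_finite[of "p - smult c q"] infinite_nz
      by (metis (mono_tags, lifting) finite_subset mem_Collect_eq subsetI)
    then show False using nc1 by simp
  qed
qed

lemma nca2: "\<forall>c. b \<noteq> smult c a"
proof
  fix c show "b \<noteq> smult c a"
  proof
    assume h: "b = smult c a"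
    have "\<forall>w\<in>UNIV - {0}. poly (q - smult c p) w = 0"
    proof
      fix w :: complex assume "w \<in> UNIV - {0}"
      then have w: "w \<noteq> 0" by simp
      have "poly b (1/w) = c * poly a (1/w)" using h by simp
      then have "(1/w)^d * poly q w = c * ((1/w)^d * poly p w)" using w poly_a poly_b by simp
      then show "poly (q - smult c p) w = 0" using w by simp
    qed
    then have "q - smult c p = 0"
      using poly_roots_finite[of "q - smult c p"] infinite_nz
      by (metis (mono_tags, lifting) finite_subset mem_Collect_eq subsetI)
    then show False using nc2 by simp
  qed
qed

lemma R_eq1: "P \<noteq> NP \<Longrightarrow> R P = rm p q (stereo P)"
  by (simp add: ratmap_def rm_def Let_def)

lemma R_NP: "R NP = rm a b 0"
proof -
  have d: "d = max (degree p) (degree q)" by (simp add: d_def)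
  consider "degree p > degree q" | "degree p = degree q" | "degree p < degree q" by linarith
  then show ?thesis
  proof cases
    case 1
    then have "poly b 0 = 0" using d by (simp add: poly_b0)
    then show ?thesis using 1 by (simp add: ratmap_def rm_def)
  next
    case 2
    then have "poly b 0 = lead_coeff q" "poly a 0 = lead_coeff p" using d by (simp_all add: poly_b0 poly_a0)
    then show ?thesis using 2 q_nz by (simp add: ratmap_def rm_def)
  next
    case 3
    then have "poly b 0 = lead_coeff q" "poly a 0 = 0" using d by (simp_all add: poly_b0 poly_a0)
    then show ?thesis using 3 q_nz by (simp add: ratmap_def rm_def)
  qed
qed

lemma R_eq2:
  assumes P: "P \<in> S2" "P \<noteq> SP" shows "R P = rm a b (stereo (sig P))"
proof -
  define u where "u = stereo (sig P)"
  have sP1: "sig P \<in> S2" using P sig_S2 by simp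
  have sP2: "sig P \<noteq> NP"
  proof
    assume "sig P = NP" then have "sig (sig P) = SP" using sig_NP by simp
    then show False using P by simp
  qed
  note sP = sP1 sP2
  then have su: "stereo_inv u = sig P" using stereo_inv_stereo u_def by simp
  show ?thesis
  proof (cases "u = 0")
    case True
    then have "sig P = SP" using su stereo_inv_0 by simp
    then have "P = NP" by (metis sig_sig sig_SP)
    then show ?thesis using True R_NP u_def by simp
  next
    case False
    have Pu: "P = stereo_inv (1 / u)" using su stereo_inv_inverse[OF False] by (metis sig_sig)
    then have PNP: "P \<noteq> NP" using stereo_inv_neq_NP by simp
    define w where "w = 1 / u"
    have sw: "stereo P = w" using Pu stereo_stereo_inv w_def by simp
    have uw: "1 / w = u" by (simp add: w_def)
    have w0: "w \<noteq> 0" using False w_def by simp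
    have pb: "poly b u = u ^ d * poly q w" "poly a u = u ^ d * poly p w"
      using poly_a[OF False] poly_b[OF False] by (simp_all add: w_def)
    have "R P = rm p q w" using R_eq1[OF PNP] sw by simp
    also have "\<dots> = rm a b u" using pb False by (simp add: rm_def)
    finally show ?thesis by (simp add: u_def)
  qed
qed

lemma R_S2: "R P \<in> S2"
  by (cases "P = NP") (simp_all add: R_NP rm_S2 R_eq1)

end

context ratl begin

lemma rm_cont_on_pq: "continuous_on UNIV (rm p q)"
  by (rule continuous_at_imp_continuous_on) (use rm_cont no_common in blast)

lemma rm_cont_on_ab: "continuous_on UNIV (rm a b)"
  by (rule continuous_at_imp_continuous_on) (use rm_cont no_common_ab in blast)

lemma sig_maps: assumes "P \<in> S2 - {SP}" shows "sig P \<in> S2 - {NP}"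
proof -
  have "sig P \<in> S2" using assms sig_S2 by simp
  moreover have "sig P \<noteq> NP"
  proof
    assume "sig P = NP" then have "sig (sig P) = SP" using sig_NP by simp
    then show False using assms by simp
  qed
  ultimately show ?thesis by simp
qed

lemma sig_mem_image: "sig P \<in> V \<longleftrightarrow> P \<in> sig ` V"
proof
  assume "sig P \<in> V" then have "sig (sig P) \<in> sig ` V" by blast
  then show "P \<in> sig ` V" by simp
next
  assume "P \<in> sig ` V" then obtain Q where "Q \<in> V" "P = sig Q" by blast
  then show "sig P \<in> V" by simp
qed

lemma R_cont: "continuous_on S2 R"
proof -
  have c1: "continuous_on (S2 - {NP}) R"
  proof -
    have "continuous_on (S2 - {NP}) (\<lambda>P. rm p q (stereo P))"
      by (rule continuous_on_compose2[OF rm_cont_on_pq cont_stereo]) auto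
    moreover have "\<And>P. P \<in> S2 - {NP} \<Longrightarrow> rm p q (stereo P) = R P" using R_eq1 by simp
    ultimately show ?thesis by (rule continuous_on_eq)
  qed
  have c2: "continuous_on (S2 - {SP}) R"
  proof -
    have "continuous_on (S2 - {SP}) (\<lambda>P. stereo (sig P))"
      by (rule continuous_on_compose2[OF cont_stereo cont_sig]) (unfold image_subset_iff, use sig_maps in blast)
    then have "continuous_on (S2 - {SP}) (\<lambda>P. rm a b (stereo (sig P)))"
      by (rule continuous_on_compose2[OF rm_cont_on_ab]) auto
    moreover have "\<And>P. P \<in> S2 - {SP} \<Longrightarrow> rm a b (stereo (sig P)) = R P" using R_eq2 by simp
    ultimately show ?thesis by (rule continuous_on_eq)
  qed
  have U: "(S2 - {NP}) \<union> (S2 - {SP}) = S2" using NP_neq_SP by auto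
  have o1: "openin (top_of_set ((S2 - {NP}) \<union> (S2 - {SP}))) (S2 - {NP})"
    by (subst U) (rule openin_S2_NP)
  have o2: "openin (top_of_set ((S2 - {NP}) \<union> (S2 - {SP}))) (S2 - {SP})"
    by (subst U) (rule openin_S2_SP)
  have "continuous_on ((S2 - {NP}) \<union> (S2 - {SP})) R"
    by (rule continuous_on_Un_local_open[OF o1 o2 c1 c2])
  then show ?thesis by (subst (asm) U)
qed

lemma R_open:
  assumes V: "openin (top_of_set S2) V" shows "openin (top_of_set S2) (R ` V)"
proof (subst openin_subopen, intro ballI)
  have VS: "V \<subseteq> S2" using V openin_imp_subset by auto
  fix y assume "y \<in> R ` V"
  then obtain x where x: "x \<in> V" "y = R x" by blast
  show "\<exists>T. openin (top_of_set S2) T \<and> y \<in> T \<and> T \<subseteq> R ` V"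
  proof (cases "x = NP")
    case False
    define Q where "Q = {w. stereo_inv w \<in> V}"
    have Q: "open Q" using open_stereo_inv_preimage[OF V] by (simp add: Q_def)
    have xS: "x \<in> S2" using x VS by auto
    have w0: "stereo x \<in> Q" using stereo_inv_stereo[OF xS False] x by (simp add: Q_def)
    obtain N where N: "open N" "stereo x \<in> N" "N \<subseteq> Q" "openin (top_of_set S2) (rm p q ` N)"
      using rm_open[OF nc1 nc2 no_common Q w0] by blast
    have sub: "rm p q ` N \<subseteq> R ` V"
    proof
      fix z assume "z \<in> rm p q ` N"
      then obtain w where w: "w \<in> N" "z = rm p q w" by blast
      have "stereo_inv w \<in> V" using w N(3) by (auto simp: Q_def)
      moreover have "R (stereo_inv w) = rm p q w"
        using R_eq1[OF stereo_inv_neq_NP] stereo_stereo_inv by simp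
      ultimately show "z \<in> R ` V" using w by (metis image_eqI)
    qed
    have "y \<in> rm p q ` N" using N(2) x R_eq1[OF False] by simp
    then show ?thesis using N(4) sub by blast
  next
    case True
    define Q where "Q = {w. sig (stereo_inv w) \<in> V}"
    have Q1: "{w. sig (stereo_inv w) \<in> V} = {w. stereo_inv w \<in> sig ` V}"
      using sig_mem_image by blast
    have Q: "open Q" using open_stereo_inv_preimage[OF openin_sig[OF V]] Q1 by (simp add: Q_def)
    have w0: "0 \<in> Q" using True x by (simp add: Q_def stereo_inv_0 sig_SP)
    obtain N where N: "open N" "0 \<in> N" "N \<subseteq> Q" "openin (top_of_set S2) (rm a b ` N)"
      using rm_open[OF nca1 nca2 no_common_ab Q w0] by blast
    have sub: "rm a b ` N \<subseteq> R ` V"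
    proof
      fix z assume "z \<in> rm a b ` N"
      then obtain w where w: "w \<in> N" "z = rm a b w" by blast
      define P where "P = sig (stereo_inv w)"
      have PV: "P \<in> V" using w N(3) by (auto simp: Q_def P_def)
      have PS: "P \<in> S2" using sig_S2 stereo_inv_S2 P_def by simp
      have PSP: "P \<noteq> SP" using stereo_inv_neq_NP P_def by (metis sig_sig sig_SP)
      have "R P = rm a b w" using R_eq2[OF PS PSP] stereo_stereo_inv P_def by simp
      then show "z \<in> R ` V" using w PV by (metis image_eqI)
    qed
    have "y \<in> rm a b ` N" using N(2) x True R_NP by simp
    then show ?thesis using N(4) sub by blast
  qed
qed

lemma R_fiber: "finite {x \<in> S2. R x = y} \<and> card {x \<in> S2. R x = y} \<le> d + 1"
proof -
  define g where "g = (if y = NP then q else p - smult (stereo y) q)"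
  have gnz: "g \<noteq> 0"
  proof (cases "y = NP")
    case True then show ?thesis using q_nz by (simp add: g_def)
  next
    case False
    have "p - smult (stereo y) q \<noteq> 0"
    proof
      assume "p - smult (stereo y) q = 0"
      then have "p = smult (stereo y) q" by simp
      then show False using nc1 by blast
    qed
    then show ?thesis using False by (simp add: g_def)
  qed
  have gdeg: "degree g \<le> d"
  proof -
    have "degree p \<le> d" "degree q \<le> d" by (auto simp: d_def)
    moreover have "degree (smult (stereo y) q) \<le> degree q" by (rule degree_smult_le)
    ultimately have "degree (p - smult (stereo y) q) \<le> d" by (intro degree_diff_le) auto
    then show ?thesis unfolding g_def using \<open>degree q \<le> d\<close> by simp
  qed
  define Z where "Z = {w. poly g w = 0}"
  have Zf: "finite Z" using poly_roots_finite[OF gnz] by (simp add: Z_def)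
  have Zc: "card Z \<le> d" using card_poly_roots_bound[OF gnz] gdeg by (simp add: Z_def)
  have sub: "{x \<in> S2. R x = y} \<subseteq> insert NP (stereo_inv ` Z)"
  proof
    fix x assume "x \<in> {x \<in> S2. R x = y}"
    then have xS: "x \<in> S2" and Rx: "R x = y" by auto
    show "x \<in> insert NP (stereo_inv ` Z)"
    proof (cases "x = NP")
      case False
      define w where "w = stereo x"
      have xw: "x = stereo_inv w" using stereo_inv_stereo[OF xS False] by (simp add: w_def)
      have Rw: "rm p q w = y" using R_eq1[OF False] Rx by (simp add: w_def)
      have "poly g w = 0"
      proof (cases "y = NP")
        case True
        have "poly q w = 0"
        proof (rule ccontr)
          assume "poly q w \<noteq> 0"
          then have "rm p q w = stereo_inv (poly p w / poly q w)" by (simp add: rm_def)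
          then show False using Rw True stereo_inv_neq_NP by metis
        qed
        then show ?thesis using True by (simp add: g_def)
      next
        case yN: False
        have qw: "poly q w \<noteq> 0"
        proof
          assume "poly q w = 0" then have "rm p q w = NP" by (simp add: rm_def)
          then show False using Rw yN by simp
        qed
        have e: "stereo_inv (poly p w / poly q w) = y" using Rw qw by (simp add: rm_def)
        then have "poly p w / poly q w = stereo y" using stereo_stereo_inv by metis
        then have "poly p w - stereo y * poly q w = 0" using qw by (simp add: field_simps)
        then show ?thesis using yN by (simp add: g_def)
      qed
      then have "w \<in> Z" by (simp add: Z_def)
      then show ?thesis using xw by blast
    qed simp
  qed
  have fin: "finite (insert NP (stereo_inv ` Z))" using Zf by simp
  have "card (insert NP (stereo_inv ` Z)) \<le> Suc (card (stereo_inv ` Z))" by (rule card_insert_le_m1) (auto simp: Zf)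
  moreover have "card (stereo_inv ` Z) \<le> card Z" using Zf by (rule card_image_le)
  ultimately have "card (insert NP (stereo_inv ` Z)) \<le> d + 1" using Zc by linarith
  moreover have "card {x \<in> S2. R x = y} \<le> card (insert NP (stereo_inv ` Z))" by (rule card_mono[OF fin sub])
  moreover have "finite {x \<in> S2. R x = y}" by (rule finite_subset[OF sub fin])
  ultimately show ?thesis by linarith
qed

lemma Rn_S2: "x \<in> S2 \<Longrightarrow> (R ^^ n) x \<in> S2"
  by (induction n) (auto simp: R_S2)

lemma Rn_cont: "continuous_on S2 (R ^^ n)"
proof (induction n)
  case 0 then show ?case by (simp add: continuous_on_id)
next
  case (Suc n)
  have "continuous_on S2 (\<lambda>x. R ((R ^^ n) x))"
    by (rule continuous_on_compose2[OF R_cont Suc]) (auto simp: Rn_S2)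
  then show ?case by (simp add: o_def)
qed

lemma Rn_fiber: "finite {x \<in> S2. (R ^^ n) x = y} \<and> card {x \<in> S2. (R ^^ n) x = y} \<le> (d + 1) ^ n"
proof (induction n arbitrary: y)
  case 0
  have "{x \<in> S2. (R ^^ 0) x = y} \<subseteq> {y}" by auto
  moreover have "card {y} = 1" by simp
  ultimately show ?case using card_mono[of "{y}" "{x \<in> S2. (R ^^ 0) x = y}"] finite_subset[of _ "{y}"] by fastforce
next
  case (Suc n)
  have sub: "{x \<in> S2. (R ^^ Suc n) x = y} \<subseteq> (\<Union>z\<in>{z \<in> S2. R z = y}. {x \<in> S2. (R ^^ n) x = z})"
    using Rn_S2 by auto
  have f1: "finite {z \<in> S2. R z = y}" using R_fiber by blast
  have fin: "finite (\<Union>z\<in>{z \<in> S2. R z = y}. {x \<in> S2. (R ^^ n) x = z})"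
    using f1 Suc.IH by blast
  have "card (\<Union>z\<in>{z \<in> S2. R z = y}. {x \<in> S2. (R ^^ n) x = z})
        \<le> (\<Sum>z\<in>{z \<in> S2. R z = y}. card {x \<in> S2. (R ^^ n) x = z})"
    by (rule card_UN_le[OF f1])
  also have "\<dots> \<le> (\<Sum>z\<in>{z \<in> S2. R z = y}. (d+1)^n)"
    by (rule sum_mono) (use Suc.IH in blast)
  also have "\<dots> = card {z \<in> S2. R z = y} * (d+1)^n" by simp
  also have "\<dots> \<le> (d+1) * (d+1)^n" using R_fiber by (intro mult_right_mono) auto
  finally have "card (\<Union>z\<in>{z \<in> S2. R z = y}. {x \<in> S2. (R ^^ n) x = z}) \<le> (d+1) ^ Suc n" by simp
  moreover have "card {x \<in> S2. (R ^^ Suc n) x = y} \<le> card (\<Union>z\<in>{z \<in> S2. R z = y}. {x \<in> S2. (R ^^ n) x = z})" by (rule card_mono[OF fin sub])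
  moreover have "finite {x \<in> S2. (R ^^ Suc n) x = y}" by (rule finite_subset[OF sub fin])
  ultimately show ?case by linarith
qed

end

lemma strict_mono_enum: "infinite (S::nat set) \<Longrightarrow> strict_mono (enumerate S)"
  by (simp add: strict_monoI enumerate_mono)

lemma fatou_S2: "fatou f \<subseteq> S2" by (auto simp: fatou_def)

lemma fatou_openin: "openin (top_of_set S2) (fatou f)"
proof (subst openin_subopen, intro ballI)
  fix x assume "x \<in> fatou f"
  then obtain U where U: "openin (top_of_set S2) U" "x \<in> U" "normal_family U (\<lambda>n. f ^^ n)"
    by (auto simp: fatou_def)
  have "U \<subseteq> fatou f" using U openin_imp_subset by (fastforce simp: fatou_def)
  then show "\<exists>T. openin (top_of_set S2) T \<and> x \<in> T \<and> T \<subseteq> fatou f" using U by blast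
qed

lemma julia_closed: "closed (julia f)"
proof -
  obtain T where T: "open T" "fatou f = S2 \<inter> T" using fatou_openin openin_open by metis
  have "julia f = S2 \<inter> - T" using T by (auto simp: julia_def)
  moreover have "closed S2" by (simp add: S2_def)
  ultimately show ?thesis using T(1) by (simp add: closed_Int open_closed)
qed

lemma ul_const: "(\<And>j. F j = h) \<Longrightarrow> uniform_limit K F h sequentially"
  by (intro uniform_limitI) simp

context ratl begin

lemma fatou_back:
  assumes xS: "x \<in> S2" and Rx: "R x \<in> fatou R" shows "x \<in> fatou R"
proof -
  obtain V where V: "openin (top_of_set S2) V" "R x \<in> V" "normal_family V (\<lambda>n. R ^^ n)"
    using Rx by (auto simp: fatou_def)
  define U where "U = S2 \<inter> R -` V"
  have U: "openin (top_of_set S2) U" unfolding U_def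
    by (rule continuous_openin_preimage[OF R_cont _ V(1)]) (simp add: R_S2)
  have xU: "x \<in> U" using xS V(2) by (simp add: U_def)
  have "normal_family U (\<lambda>n. R ^^ n)" unfolding normal_family_def
  proof
    fix k :: "nat \<Rightarrow> nat"
    show "\<exists>r g. strict_mono r \<and> (\<forall>K. compact K \<and> K \<subseteq> U \<longrightarrow> uniform_limit K (\<lambda>j. (R ^^ k (r j))) g sequentially)"
    proof (cases "finite {j. k j \<noteq> 0}")
      case False
      define r0 where "r0 = enumerate {j. k j \<noteq> 0}"
      have r0a: "strict_mono r0" unfolding r0_def by (rule strict_mono_enum[OF False])
      have r0b: "k (r0 j) \<noteq> 0" for j
        using enumerate_in_set[OF False, of j] unfolding r0_def by simp
      note r0 = r0a r0b
      define k' where "k' j = k (r0 j) - 1" for j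
      have kk: "k (r0 j) = Suc (k' j)" for j using r0(2)[of j] by (simp add: k'_def)
      have "\<exists>r g. strict_mono r \<and> (\<forall>K. compact K \<and> K \<subseteq> V \<longrightarrow> uniform_limit K (\<lambda>j. (R ^^ k' (r j))) g sequentially)"
        using V(3) unfolding normal_family_def by (rule spec)
      then obtain r1 g where r1: "strict_mono r1"
        and lim0: "\<forall>K. compact K \<and> K \<subseteq> V \<longrightarrow> uniform_limit K (\<lambda>j. (R ^^ k' (r1 j))) g sequentially"
        by (elim exE conjE)
      have lim: "uniform_limit K (\<lambda>j. (R ^^ k' (r1 j))) g sequentially" if "compact K" "K \<subseteq> V" for K
        using lim0 that by simp
      have "strict_mono (r0 \<circ> r1)" using r0(1) r1 by (simp add: strict_mono_def)
      moreover have "uniform_limit K (\<lambda>j. (R ^^ k ((r0 \<circ> r1) j))) (g \<circ> R) sequentially"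
        if K: "compact K" "K \<subseteq> U" for K
      proof -
        have KS: "K \<subseteq> S2" using K U_def by auto
        have cK: "compact (R ` K)"
          using compact_continuous_image[OF continuous_on_subset[OF R_cont KS] K(1)] .
        have "R ` K \<subseteq> V" using K(2) by (auto simp: U_def)
        then have ul: "uniform_limit (R ` K) (\<lambda>j. (R ^^ k' (r1 j))) g sequentially" using lim cK by simp
        show ?thesis
        proof (rule uniform_limitI)
          fix e :: real assume "e > 0"
          then have ev: "\<forall>\<^sub>F j in sequentially. \<forall>y\<in>R ` K. dist ((R ^^ k' (r1 j)) y) (g y) < e"
            using uniform_limitD[OF ul] by blast
          show "\<forall>\<^sub>F j in sequentially. \<forall>u\<in>K. dist ((R ^^ k ((r0 \<circ> r1) j)) u) ((g \<circ> R) u) < e"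
            using ev
          proof eventually_elim
            case (elim j)
            show ?case
            proof
              fix u assume "u \<in> K"
              have "(R ^^ k ((r0 \<circ> r1) j)) u = (R ^^ k' (r1 j)) (R u)"
                by (simp only: comp_apply kk funpow_Suc_right)
              then show "dist ((R ^^ k ((r0 \<circ> r1) j)) u) ((g \<circ> R) u) < e"
                using elim \<open>u \<in> K\<close> by simp
            qed
          qed
        qed
      qed
      ultimately show ?thesis by (intro exI[of _ "r0 \<circ> r1"] exI[of _ "g \<circ> R"]) simp
    next
      case True
      have "{j. k j = 0} = UNIV - {j. k j \<noteq> 0}" by auto
      then have inf: "infinite {j. k j = 0}"
        using Diff_infinite_finite[OF True infinite_UNIV_nat] by simp
      define r where "r = enumerate {j. k j = 0}"
      have ra: "strict_mono r" unfolding r_def by (rule strict_mono_enum[OF inf])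
      have rb: "k (r j) = 0" for j using enumerate_in_set[OF inf, of j] unfolding r_def by simp
      note r = ra rb
      have "uniform_limit K (\<lambda>j. (R ^^ k (r j))) id sequentially" for K
        by (rule ul_const) (simp add: r(2))
      then show ?thesis using r(1) by (intro exI[of _ r] exI[of _ id]) simp
    qed
  qed
  then show ?thesis using U xU xS unfolding fatou_def by blast
qed


lemma cover_lemma:
  assumes U: "openin (top_of_set S2) U" and K: "compact K" and KU: "K \<subseteq> R ` U"
  shows "\<exists>L. compact L \<and> L \<subseteq> U \<and> K \<subseteq> R ` L"
proof -
  obtain T where T: "open T" "U = S2 \<inter> T" using U openin_open by metis
  have "\<forall>y\<in>K. \<exists>t. fst t \<in> U \<and> R (fst t) = y \<and> fst (snd t) > 0 \<and> cball (fst t) (fst (snd t)) \<subseteq> T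
        \<and> open (snd (snd t)) \<and> R ` (S2 \<inter> ball (fst t) (fst (snd t))) = S2 \<inter> snd (snd t)"
  proof
    fix y assume "y \<in> K"
    then obtain u where u: "u \<in> U" "R u = y" using KU by blast
    then have "u \<in> T" using T by simp
    then obtain e where e: "e > 0" "cball u e \<subseteq> T" using T(1) open_contains_cball by blast
    have "openin (top_of_set S2) (S2 \<inter> ball u e)" by (rule openin_open_Int) simp
    then have "openin (top_of_set S2) (R ` (S2 \<inter> ball u e))" by (rule R_open)
    then obtain W where W: "open W" "R ` (S2 \<inter> ball u e) = S2 \<inter> W" using openin_open by metis
    show "\<exists>t. fst t \<in> U \<and> R (fst t) = y \<and> fst (snd t) > 0 \<and> cball (fst t) (fst (snd t)) \<subseteq> T
        \<and> open (snd (snd t)) \<and> R ` (S2 \<inter> ball (fst t) (fst (snd t))) = S2 \<inter> snd (snd t)"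
      by (rule exI[of _ "(u, e, W)"]) (simp add: u e W)
  qed
  then obtain f where f: "\<forall>y\<in>K. fst (f y) \<in> U \<and> R (fst (f y)) = y \<and> fst (snd (f y)) > 0 \<and> cball (fst (f y)) (fst (snd (f y))) \<subseteq> T
        \<and> open (snd (snd (f y))) \<and> R ` (S2 \<inter> ball (fst (f y)) (fst (snd (f y)))) = S2 \<inter> snd (snd (f y))"
    by (rule bchoice[THEN exE]) blast
  define u where "u y = fst (f y)" for y
  define e where "e y = fst (snd (f y))" for y
  define W where "W y = snd (snd (f y))" for y
  have fu: "\<And>y. y \<in> K \<Longrightarrow> u y \<in> U \<and> R (u y) = y \<and> e y > 0 \<and> cball (u y) (e y) \<subseteq> T
        \<and> open (W y) \<and> R ` (S2 \<inter> ball (u y) (e y)) = S2 \<inter> W y"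
    using f unfolding u_def e_def W_def by blast
  have KS: "K \<subseteq> S2" using KU R_S2 by blast
  have KW: "K \<subseteq> (\<Union>y\<in>K. W y)"
  proof
    fix y assume y: "y \<in> K"
    have "u y \<in> S2 \<inter> ball (u y) (e y)" using fu[OF y] T by auto
    then have "R (u y) \<in> R ` (S2 \<inter> ball (u y) (e y))" by blast
    then have "y \<in> W y" using fu[OF y] by simp
    then show "y \<in> (\<Union>y\<in>K. W y)" using y by blast
  qed
  obtain C where C: "C \<subseteq> K" "finite C" "K \<subseteq> (\<Union>y\<in>C. W y)"
    using compactE_image[OF K _ KW] fu by blast
  define L where "L = (\<Union>y\<in>C. S2 \<inter> cball (u y) (e y))"
  have cS2: "closed S2" by (simp add: S2_def)
  have "compact L" unfolding L_def
    by (intro compact_UN C(2)) (simp add: compact_Int_closed cS2 closed_Int_compact)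
  moreover have "L \<subseteq> U" unfolding L_def using fu C(1) T by blast
  moreover have "K \<subseteq> R ` L"
  proof
    fix z assume z: "z \<in> K"
    then obtain y where y: "y \<in> C" "z \<in> W y" using C(3) by blast
    then have "z \<in> S2 \<inter> W y" using z KS by blast
    then have "z \<in> R ` (S2 \<inter> ball (u y) (e y))" using fu y C(1) by blast
    moreover have "S2 \<inter> ball (u y) (e y) \<subseteq> L" unfolding L_def using y(1) by fastforce
    ultimately show "z \<in> R ` L" by blast
  qed
  ultimately show ?thesis by blast
qed

lemma fatou_fwd:
  assumes x: "x \<in> fatou R" shows "R x \<in> fatou R"
proof -
  obtain U where U: "openin (top_of_set S2) U" "x \<in> U" "normal_family U (\<lambda>n. R ^^ n)"
    using x unfolding fatou_def by blast
  define V where "V = R ` U"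
  have V: "openin (top_of_set S2) V" unfolding V_def by (rule R_open[OF U(1)])
  have RxV: "R x \<in> V" using U(2) by (simp add: V_def)
  have "normal_family V (\<lambda>n. R ^^ n)" unfolding normal_family_def
  proof
    fix k :: "nat \<Rightarrow> nat"
    have "\<exists>r g. strict_mono r \<and> (\<forall>K. compact K \<and> K \<subseteq> U \<longrightarrow> uniform_limit K (\<lambda>j. (R ^^ Suc (k (r j)))) g sequentially)"
      using U(3) unfolding normal_family_def by (rule allE[of _ "\<lambda>j. Suc (k j)"])
    then obtain r g where r: "strict_mono r"
      and lim0: "\<forall>K. compact K \<and> K \<subseteq> U \<longrightarrow> uniform_limit K (\<lambda>j. (R ^^ Suc (k (r j)))) g sequentially"
      by (elim exE conjE)
    have lim: "uniform_limit K (\<lambda>j. (R ^^ Suc (k (r j)))) g sequentially" if "compact K" "K \<subseteq> U" for K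
      using lim0 that by simp
    have pt: "(\<lambda>j. (R ^^ Suc (k (r j))) u) \<longlonglongrightarrow> g u" if "u \<in> U" for u
      using tendsto_uniform_limitI[OF lim[of "{u}"]] that by simp
    have same: "g u = g u'" if "u \<in> U" "u' \<in> U" "R u = R u'" for u u'
    proof -
      have "(\<lambda>j. (R ^^ Suc (k (r j))) u) = (\<lambda>j. (R ^^ Suc (k (r j))) u')"
        using that(3) by (simp only: funpow_Suc_right comp_apply)
      then have "(\<lambda>j. (R ^^ Suc (k (r j))) u') \<longlonglongrightarrow> g u" using pt[OF that(1)] by simp
      then show ?thesis using LIMSEQ_unique pt[OF that(2)] by blast
    qed
    define h where "h y = g (SOME u. u \<in> U \<and> R u = y)" for y
    have hy: "h (R u) = g u" if "u \<in> U" for u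
    proof -
      have ex: "\<exists>v. v \<in> U \<and> R v = R u" using that by blast
      define v where "v = (SOME v. v \<in> U \<and> R v = R u)"
      have "v \<in> U \<and> R v = R u" unfolding v_def by (rule someI_ex[OF ex])
      then have "g v = g u" using same that by blast
      moreover have "h (R u) = g v" by (simp add: h_def v_def)
      ultimately show ?thesis by simp
    qed
    have "uniform_limit K (\<lambda>j. (R ^^ k (r j))) h sequentially" if K: "compact K" "K \<subseteq> V" for K
    proof -
      obtain L where L: "compact L" "L \<subseteq> U" "K \<subseteq> R ` L"
        using cover_lemma[OF U(1) K(1)] K(2) unfolding V_def by blast
      have ul: "uniform_limit L (\<lambda>j. (R ^^ Suc (k (r j)))) g sequentially" using lim L by simp
      show ?thesis
      proof (rule uniform_limitI)
        fix e :: real assume "e > 0"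
        then have ev: "\<forall>\<^sub>F j in sequentially. \<forall>u\<in>L. dist ((R ^^ Suc (k (r j))) u) (g u) < e"
          using uniform_limitD[OF ul] by blast
        show "\<forall>\<^sub>F j in sequentially. \<forall>y\<in>K. dist ((R ^^ k (r j)) y) (h y) < e"
          using ev
        proof eventually_elim
          case (elim j)
          show ?case
          proof
            fix y assume "y \<in> K"
            then obtain u where u: "u \<in> L" "y = R u" using L(3) by blast
            have "(R ^^ k (r j)) y = (R ^^ Suc (k (r j))) u"
              using u(2) by (simp only: funpow_Suc_right comp_apply)
            moreover have "h y = g u"
            proof -
              have "u \<in> U" using L(2) u(1) by blast
              then show ?thesis using hy u(2) by simp
            qed
            ultimately show "dist ((R ^^ k (r j)) y) (h y) < e" using elim u(1) by simp
          qed
        qed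
      qed
    qed
    then show "\<exists>r g. strict_mono r \<and> (\<forall>K. compact K \<and> K \<subseteq> V \<longrightarrow> uniform_limit K (\<lambda>j. (R ^^ k (r j))) g sequentially)"
      using r by (intro exI[of _ r] exI[of _ h]) simp
  qed
  moreover have "R x \<in> S2" by (rule R_S2)
  ultimately show ?thesis using V RxV unfolding fatou_def by blast
qed

lemma julia_fwd: assumes "x \<in> julia R" shows "R x \<in> julia R"
proof -
  have xS: "x \<in> S2" and nf: "x \<notin> fatou R" using assms by (auto simp: julia_def)
  have "R x \<notin> fatou R" using fatou_back[OF xS] nf by blast
  then show ?thesis using R_S2[of x] by (simp add: julia_def)
qed

end

definition mop :: "pt set \<Rightarrow> (pt \<Rightarrow> pt) \<Rightarrow> (pt \<Rightarrow> complex) \<Rightarrow> op" where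
  "mop X0 \<phi> f = (\<lambda>\<xi>. if \<xi> \<in> l2 X0 then (\<lambda>x. if x \<in> X0 then f x * \<xi> (\<phi> x) else 0) else (\<lambda>x. 0))"

lemma rho_mop: "rho R X n f = mop (Xcirc R X) (R ^^ n) f"
  by (simp add: rho_def mop_def)

abbreviation sq :: "complex \<Rightarrow> real" where "sq z \<equiv> (cmod z)^2"

lemma l2_D: "\<xi> \<in> l2 X0 \<Longrightarrow> x \<notin> X0 \<Longrightarrow> \<xi> x = 0" unfolding l2_def by blast
lemma l2_summable: "\<xi> \<in> l2 X0 \<Longrightarrow> (\<lambda>x. sq (\<xi> x)) summable_on X0" by (simp add: l2_def)

lemma zero_l2: "(\<lambda>x. 0) \<in> l2 X0" by (simp add: l2_def)

lemma nrm_nonneg: "nrm X0 \<xi> \<ge> 0"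
  unfolding nrm_def by (intro real_sqrt_ge_zero infsum_nonneg) simp

lemma infsum_sq_nonneg: "infsum (\<lambda>x. sq (\<xi> x)) X0 \<ge> 0"
  by (intro infsum_nonneg) simp

lemma l2_scale: "\<xi> \<in> l2 X0 \<Longrightarrow> (\<lambda>x. c * \<xi> x) \<in> l2 X0"
proof -
  assume a: "\<xi> \<in> l2 X0"
  have "(\<lambda>x. (cmod c)^2 * sq (\<xi> x)) summable_on X0"
    using l2_summable[OF a] by (rule summable_on_cmult_right)
  then show ?thesis using a by (simp add: l2_def norm_mult power_mult_distrib)
qed

lemma nrm_scale: "\<xi> \<in> l2 X0 \<Longrightarrow> nrm X0 (\<lambda>x. c * \<xi> x) = cmod c * nrm X0 \<xi>"
proof -
  assume a: "\<xi> \<in> l2 X0"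
  have "infsum (\<lambda>x. sq (c * \<xi> x)) X0 = infsum (\<lambda>x. (cmod c)^2 * sq (\<xi> x)) X0"
    by (simp add: norm_mult power_mult_distrib)
  also have "\<dots> = (cmod c)^2 * infsum (\<lambda>x. sq (\<xi> x)) X0"
    using l2_summable[OF a] by (intro infsum_cmult_right) simp
  finally show ?thesis by (simp add: nrm_def real_sqrt_mult)
qed

lemma sq_add_le: "sq (u + v) \<le> 2 * sq u + 2 * sq v"
proof -
  have "cmod (u + v) \<le> cmod u + cmod v" by (rule norm_triangle_ineq)
  then have "sq (u + v) \<le> (cmod u + cmod v)^2" by (simp add: power_mono)
  also have "\<dots> \<le> 2 * sq u + 2 * sq v" by (smt (verit) sum_squares_bound power2_sum zero_le_power2 four_x_squared)
  finally show ?thesis .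
qed

lemma l2_add: "\<xi> \<in> l2 X0 \<Longrightarrow> \<eta> \<in> l2 X0 \<Longrightarrow> (\<lambda>x. \<xi> x + \<eta> x) \<in> l2 X0"
proof -
  assume a: "\<xi> \<in> l2 X0" and b: "\<eta> \<in> l2 X0"
  have s: "(\<lambda>x. 2 * sq (\<xi> x) + 2 * sq (\<eta> x)) summable_on X0"
    by (intro summable_on_add summable_on_cmult_right l2_summable a b)
  have "(\<lambda>x. sq (\<xi> x + \<eta> x)) summable_on X0"
    by (rule summable_on_comparison_test[OF s]) (auto simp: sq_add_le)
  then show ?thesis using a b by (simp add: l2_def)
qed

lemma l2_diff: "\<xi> \<in> l2 X0 \<Longrightarrow> \<eta> \<in> l2 X0 \<Longrightarrow> (\<lambda>x. \<xi> x - \<eta> x) \<in> l2 X0"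
  using l2_add[of \<xi> X0 "\<lambda>x. (-1) * \<eta> x"] l2_scale[of \<eta> X0 "-1"] by simp

lemma infsum_sq_diff_le:
  assumes a: "\<xi> \<in> l2 X0" and b: "\<eta> \<in> l2 X0"
  shows "infsum (\<lambda>x. sq (\<xi> x - \<eta> x)) X0 \<le> 2 * infsum (\<lambda>x. sq (\<xi> x)) X0 + 2 * infsum (\<lambda>x. sq (\<eta> x)) X0"
proof -
  have s1: "(\<lambda>x. sq (\<xi> x - \<eta> x)) summable_on X0" using l2_diff[OF a b] by (simp add: l2_def)
  have s2: "(\<lambda>x. 2 * sq (\<xi> x) + 2 * sq (\<eta> x)) summable_on X0"
    by (intro summable_on_add summable_on_cmult_right l2_summable a b)
  have "infsum (\<lambda>x. sq (\<xi> x - \<eta> x)) X0 \<le> infsum (\<lambda>x. 2 * sq (\<xi> x) + 2 * sq (\<eta> x)) X0"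
    using sq_add_le[of _ "- _"] by (intro infsum_mono s1 s2) (metis diff_conv_add_uminus norm_minus_cancel)
  also have "\<dots> = 2 * infsum (\<lambda>x. sq (\<xi> x)) X0 + 2 * infsum (\<lambda>x. sq (\<eta> x)) X0"
    by (subst infsum_add) (auto intro: summable_on_cmult_right l2_summable a b simp: infsum_cmult_right l2_summable[OF a] l2_summable[OF b])
  finally show ?thesis .
qed

lemma eval_le_nrm:
  assumes a: "\<xi> \<in> l2 X0" and x: "x \<in> X0" shows "cmod (\<xi> x) \<le> nrm X0 \<xi>"
proof -
  have "sum (\<lambda>x. sq (\<xi> x)) {x} \<le> infsum (\<lambda>x. sq (\<xi> x)) X0"
    by (rule finite_sum_le_infsum[OF l2_summable[OF a]]) (use x in auto)
  then have "sq (\<xi> x) \<le> infsum (\<lambda>x. sq (\<xi> x)) X0" by simp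
  then have "sqrt (sq (\<xi> x)) \<le> nrm X0 \<xi>" unfolding nrm_def by (rule real_sqrt_le_mono)
  then show ?thesis by simp
qed

lemma nrm_zero_imp: "\<xi> \<in> l2 X0 \<Longrightarrow> nrm X0 \<xi> = 0 \<Longrightarrow> \<xi> = (\<lambda>x. 0)"
proof
  fix x assume a: "\<xi> \<in> l2 X0" "nrm X0 \<xi> = 0"
  show "\<xi> x = 0"
  proof (cases "x \<in> X0")
    case True then show ?thesis using eval_le_nrm[OF a(1) True] a(2) by simp
  qed (use a l2_D in auto)
qed

definition delta :: "pt \<Rightarrow> pt \<Rightarrow> complex" where "delta y = (\<lambda>z. if z = y then 1 else 0)"

lemma delta_l2: assumes "y \<in> X0" shows "delta y \<in> l2 X0" "nrm X0 (delta y) = 1"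
proof -
  have eq: "(\<lambda>x. sq (delta y x)) summable_on X0 \<longleftrightarrow> (\<lambda>x. sq (delta y x)) summable_on {y}"
    by (rule summable_on_cong_neutral) (use assms in \<open>auto simp: delta_def\<close>)
  have "(\<lambda>x. sq (delta y x)) summable_on X0" using eq by simp
  then show "delta y \<in> l2 X0" using assms by (auto simp: l2_def delta_def)
  have "infsum (\<lambda>x. sq (delta y x)) X0 = infsum (\<lambda>x. sq (delta y x)) {y}"
    by (rule infsum_cong_neutral) (use assms in \<open>auto simp: delta_def\<close>)
  then show "nrm X0 (delta y) = 1" by (simp add: nrm_def delta_def)
qed

lemma comp_l2:
  assumes xi: "\<xi> \<in> l2 X0" and B: "\<forall>x\<in>X0. cmod (f x) \<le> B"
    and inv: "\<forall>x\<in>X0. \<phi> x \<in> X0" and fib: "\<forall>y. finite {x\<in>X0. \<phi> x = y} \<and> card {x\<in>X0. \<phi> x = y} \<le> D"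
  defines "\<eta> \<equiv> (\<lambda>x. if x \<in> X0 then f x * \<xi> (\<phi> x) else 0)"
  shows "\<eta> \<in> l2 X0" "infsum (\<lambda>x. sq (\<eta> x)) X0 \<le> B^2 * D * infsum (\<lambda>x. sq (\<xi> x)) X0"
proof -
  let ?a = "\<lambda>y. sq (\<xi> y)"
  have B0: "B \<ge> 0" if "X0 \<noteq> {}" using B that norm_ge_zero order.trans by blast
  have bound: "sum (\<lambda>x. sq (\<eta> x)) F \<le> B^2 * D * infsum ?a X0" if F: "finite F" "F \<subseteq> X0" for F
  proof (cases "F = {}")
    case True then show ?thesis using infsum_sq_nonneg[of \<xi> X0] by (simp add: zero_le_mult_iff)
  next
    case False
    then have B0: "B \<ge> 0" using B0 F by blast
    have "sum (\<lambda>x. sq (\<eta> x)) F \<le> sum (\<lambda>x. B^2 * ?a (\<phi> x)) F"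
    proof (rule sum_mono)
      fix x assume x: "x \<in> F"
      then have "x \<in> X0" using F by blast
      then have "sq (\<eta> x) = (cmod (f x))^2 * ?a (\<phi> x)" by (simp add: \<eta>_def norm_mult power_mult_distrib)
      also have "\<dots> \<le> B^2 * ?a (\<phi> x)" using B \<open>x \<in> X0\<close> by (intro mult_right_mono power_mono) auto
      finally show "sq (\<eta> x) \<le> B^2 * ?a (\<phi> x)" .
    qed
    also have "\<dots> = B^2 * sum (\<lambda>x. ?a (\<phi> x)) F" by (simp add: sum_distrib_left)
    also have "sum (\<lambda>x. ?a (\<phi> x)) F = sum (\<lambda>y. sum (\<lambda>x. ?a (\<phi> x)) {x. x \<in> F \<and> \<phi> x = y}) (\<phi> ` F)"
      by (rule sum.image_gen[OF F(1)])
    also have "\<dots> = sum (\<lambda>y. real (card {x. x \<in> F \<and> \<phi> x = y}) * ?a y) (\<phi> ` F)"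
      by (rule sum.cong) auto
    also have "\<dots> \<le> sum (\<lambda>y. D * ?a y) (\<phi> ` F)"
    proof (rule sum_mono)
      fix y assume "y \<in> \<phi> ` F"
      have fy: "finite {x\<in>X0. \<phi> x = y}" using fib by blast
      have "card {x. x \<in> F \<and> \<phi> x = y} \<le> card {x\<in>X0. \<phi> x = y}"
        by (rule card_mono[OF fy]) (use F in blast)
      then have "card {x. x \<in> F \<and> \<phi> x = y} \<le> D" using fib order.trans by blast
      then show "real (card {x. x \<in> F \<and> \<phi> x = y}) * ?a y \<le> D * ?a y"
        by (intro mult_right_mono) auto
    qed
    also have "\<dots> = D * sum ?a (\<phi> ` F)" by (simp add: sum_distrib_left)
    also have "sum ?a (\<phi> ` F) \<le> infsum ?a X0"
      by (rule finite_sum_le_infsum[OF l2_summable[OF xi]]) (use F inv in auto)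
    finally show ?thesis using B0 by (simp add: mult_left_mono mult.assoc)
  qed
  have summ: "(\<lambda>x. sq (\<eta> x)) summable_on X0"
  proof (rule nonneg_bdd_above_summable_on)
    show "bdd_above (sum (\<lambda>x. sq (\<eta> x)) ` {F. F \<subseteq> X0 \<and> finite F})"
      using bound by (intro bdd_aboveI[of _ "B^2 * D * infsum ?a X0"]) auto
  qed simp
  then show "\<eta> \<in> l2 X0" by (simp add: l2_def \<eta>_def)
  show "infsum (\<lambda>x. sq (\<eta> x)) X0 \<le> B^2 * D * infsum (\<lambda>x. sq (\<xi> x)) X0"
    using bound by (intro infsum_le_finite_sums summ) auto
qed

locale mopl =
  fixes X0 :: "pt set" and \<phi> :: "pt \<Rightarrow> pt" and D :: nat
  assumes inv: "\<forall>x\<in>X0. \<phi> x \<in> X0"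
    and fib: "\<forall>y. finite {x\<in>X0. \<phi> x = y} \<and> card {x\<in>X0. \<phi> x = y} \<le> D"
begin

lemma mop_eq: "\<xi> \<in> l2 X0 \<Longrightarrow> mop X0 \<phi> f \<xi> = (\<lambda>x. if x \<in> X0 then f x * \<xi> (\<phi> x) else 0)"
  by (simp add: mop_def)

lemma mop_l2:
  assumes "\<xi> \<in> l2 X0" "\<forall>x\<in>X0. cmod (f x) \<le> B"
  shows "mop X0 \<phi> f \<xi> \<in> l2 X0"
  unfolding mop_eq[OF assms(1)] by (rule comp_l2(1)[OF assms inv fib])

lemma mop_nrm:
  assumes "\<xi> \<in> l2 X0" "\<forall>x\<in>X0. cmod (f x) \<le> B" "B \<ge> 0"
  shows "nrm X0 (mop X0 \<phi> f \<xi>) \<le> B * sqrt D * nrm X0 \<xi>"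
proof -
  have "infsum (\<lambda>x. sq (mop X0 \<phi> f \<xi> x)) X0 \<le> B^2 * D * infsum (\<lambda>x. sq (\<xi> x)) X0"
    unfolding mop_eq[OF assms(1)] by (rule comp_l2(2)[OF assms(1,2) inv fib])
  then have "nrm X0 (mop X0 \<phi> f \<xi>) \<le> sqrt (B^2 * D * infsum (\<lambda>x. sq (\<xi> x)) X0)"
    unfolding nrm_def by (rule real_sqrt_le_mono)
  also have "\<dots> = B * sqrt D * nrm X0 \<xi>" using assms(3) by (simp add: nrm_def real_sqrt_mult)
  finally show ?thesis .
qed

lemma mop_bops:
  assumes B: "\<forall>x\<in>X0. cmod (f x) \<le> B" "B \<ge> 0"
  shows "mop X0 \<phi> f \<in> bops X0"
  unfolding bops_def
proof (intro CollectI conjI allI ballI impI)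
  fix \<xi> show "\<xi> \<notin> l2 X0 \<Longrightarrow> mop X0 \<phi> f \<xi> = (\<lambda>x. 0)" by (simp add: mop_def)
next
  fix \<xi> assume "\<xi> \<in> l2 X0" then show "mop X0 \<phi> f \<xi> \<in> l2 X0" using mop_l2 B by blast
next
  fix \<xi> \<eta> assume a: "\<xi> \<in> l2 X0" "\<eta> \<in> l2 X0"
  then have "(\<lambda>x. \<xi> x + \<eta> x) \<in> l2 X0" by (rule l2_add)
  then show "mop X0 \<phi> f (\<lambda>x. \<xi> x + \<eta> x) = (\<lambda>x. mop X0 \<phi> f \<xi> x + mop X0 \<phi> f \<eta> x)"
    using a by (auto simp: mop_def distrib_left)
next
  fix c \<xi> assume a: "\<xi> \<in> l2 X0"
  then have "(\<lambda>x. c * \<xi> x) \<in> l2 X0" by (rule l2_scale)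
  then show "mop X0 \<phi> f (\<lambda>x. c * \<xi> x) = (\<lambda>x. c * mop X0 \<phi> f \<xi> x)"
    using a by (auto simp: mop_def)
next
  show "\<exists>C. \<forall>\<xi>\<in>l2 X0. nrm X0 (mop X0 \<phi> f \<xi>) \<le> C * nrm X0 \<xi>"
    using mop_nrm[OF _ B(1) B(2)] by blast
qed

lemma opnorm_mop_le:
  assumes B: "\<forall>x\<in>X0. cmod (f x) \<le> B" "B \<ge> 0"
  shows "opnorm X0 (mop X0 \<phi> f) \<le> B * sqrt D"
proof -
  define S where "S = {nrm X0 (mop X0 \<phi> f \<xi>) |\<xi>. \<xi> \<in> l2 X0 \<and> nrm X0 \<xi> \<le> 1}"
  have n0: "nrm X0 (\<lambda>x. 0) = 0" by (simp add: nrm_def)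
  have "nrm X0 (mop X0 \<phi> f (\<lambda>x. 0)) \<in> S" unfolding S_def
  proof (intro CollectI exI conjI)
    show "(\<lambda>x. 0) \<in> l2 X0" by (rule zero_l2)
    show "nrm X0 (\<lambda>x. 0) \<le> 1" using n0 by simp
  qed (rule refl)
  then have ne: "S \<noteq> {}" by blast
  have bd: "r \<le> B * sqrt D" if rS: "r \<in> S" for r
  proof -
    obtain \<xi> where xi: "\<xi> \<in> l2 X0" "nrm X0 \<xi> \<le> 1" "r = nrm X0 (mop X0 \<phi> f \<xi>)"
      using rS unfolding S_def by blast
    have "r \<le> B * sqrt D * nrm X0 \<xi>" using mop_nrm[OF xi(1) B(1) B(2)] xi(3) by simp
    also have "\<dots> \<le> B * sqrt D"
    proof (rule mult_left_le[OF xi(2)])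
      show "0 \<le> B * sqrt (real D)" using B(2) by simp
    qed
    finally show ?thesis .
  qed
  show ?thesis unfolding opnorm_def S_def[symmetric] by (rule cSup_least[OF ne bd])
qed

end


lemma half_pow_le0: assumes "\<forall>k. r \<le> C * (1/2::real)^k" shows "r \<le> 0"
proof -
  have "(\<lambda>k. C * (1/2::real)^k) \<longlonglongrightarrow> C * 0"
    by (intro tendsto_mult tendsto_const LIMSEQ_power_zero) simp
  then show ?thesis using assms by (intro LIMSEQ_le_const[of "\<lambda>k. C * (1/2::real)^k"]) auto
qed

lemma bops_bound: "T \<in> bops X0 \<Longrightarrow> \<exists>C\<ge>0. \<forall>\<xi>\<in>l2 X0. nrm X0 (T \<xi>) \<le> C * nrm X0 \<xi>"
proof -
  assume "T \<in> bops X0"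
  then obtain C where C: "\<forall>\<xi>\<in>l2 X0. nrm X0 (T \<xi>) \<le> C * nrm X0 \<xi>" unfolding bops_def by blast
  have "\<forall>\<xi>\<in>l2 X0. nrm X0 (T \<xi>) \<le> max C 0 * nrm X0 \<xi>"
    using C nrm_nonneg by (meson max.cobounded1 mult_right_mono order.trans)
  then show ?thesis by (intro exI[of _ "max C 0"]) simp
qed

lemma bops_l2: "T \<in> bops X0 \<Longrightarrow> \<xi> \<in> l2 X0 \<Longrightarrow> T \<xi> \<in> l2 X0"
  unfolding bops_def by blast

lemma bops_scale: "T \<in> bops X0 \<Longrightarrow> \<xi> \<in> l2 X0 \<Longrightarrow> T (\<lambda>x. c * \<xi> x) = (\<lambda>x. c * T \<xi> x)"
  unfolding bops_def by blast

lemma nrm_sq: "nrm X0 \<xi> ^ 2 = infsum (\<lambda>x. sq (\<xi> x)) X0"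
  unfolding nrm_def using infsum_sq_nonneg by simp

lemma opdiff_le:
  assumes T: "T \<in> bops X0" and A: "A \<in> bops X0"
    and xi: "\<xi> \<in> l2 X0" and x: "x \<in> X0"
  shows "cmod (T \<xi> x - A \<xi> x) \<le> opnorm X0 (\<lambda>\<xi> x. T \<xi> x - A \<xi> x) * nrm X0 \<xi>"
proof -
  define S where "S = (\<lambda>\<xi> x. T \<xi> x - A \<xi> x)"
  obtain C1 where C1: "C1 \<ge> 0" "\<forall>\<xi>\<in>l2 X0. nrm X0 (T \<xi>) \<le> C1 * nrm X0 \<xi>" using bops_bound[OF T] by blast
  obtain C2 where C2: "C2 \<ge> 0" "\<forall>\<xi>\<in>l2 X0. nrm X0 (A \<xi>) \<le> C2 * nrm X0 \<xi>" using bops_bound[OF A] by blast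
  have Sl2: "S \<eta> \<in> l2 X0" if "\<eta> \<in> l2 X0" for \<eta>
    unfolding S_def by (rule l2_diff[OF bops_l2[OF T that] bops_l2[OF A that]])
  define M where "M = {nrm X0 (S \<eta>) |\<eta>. \<eta> \<in> l2 X0 \<and> nrm X0 \<eta> \<le> 1}"
  have bdd: "bdd_above M"
  proof (rule bdd_aboveI)
    fix r assume "r \<in> M"
    then obtain \<eta> where eta: "\<eta> \<in> l2 X0" "nrm X0 \<eta> \<le> 1" "r = nrm X0 (S \<eta>)" unfolding M_def by blast
    have t: "nrm X0 (T \<eta>) \<le> C1" using C1 eta(1,2) by (meson mult_left_le order.trans)
    have a: "nrm X0 (A \<eta>) \<le> C2" using C2 eta(1,2) by (meson mult_left_le order.trans)
    have "r^2 = infsum (\<lambda>x. sq (T \<eta> x - A \<eta> x)) X0" using eta(3) nrm_sq by (simp add: S_def)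
    also have "\<dots> \<le> 2 * nrm X0 (T \<eta>)^2 + 2 * nrm X0 (A \<eta>)^2"
      unfolding nrm_sq by (rule infsum_sq_diff_le[OF bops_l2[OF T eta(1)] bops_l2[OF A eta(1)]])
    also have "\<dots> \<le> 2 * C1^2 + 2 * C2^2"
      using t a nrm_nonneg by (intro add_mono mult_left_mono power_mono) auto
    finally have "r^2 \<le> 2 * C1^2 + 2 * C2^2" .
    then have "sqrt (r^2) \<le> sqrt (2 * C1^2 + 2 * C2^2)" by (rule real_sqrt_le_mono)
    moreover have "r \<ge> 0" using eta(3) nrm_nonneg by simp
    ultimately show "r \<le> sqrt (2 * C1^2 + 2 * C2^2)" by simp
  qed
  have unit: "cmod (S \<eta> x) \<le> opnorm X0 S" if "\<eta> \<in> l2 X0" "nrm X0 \<eta> \<le> 1" for \<eta>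
  proof -
    have "cmod (S \<eta> x) \<le> nrm X0 (S \<eta>)" by (rule eval_le_nrm[OF Sl2[OF that(1)] x])
    also have "nrm X0 (S \<eta>) \<in> M" using that unfolding M_def by blast
    then have "nrm X0 (S \<eta>) \<le> Sup M" using bdd by (rule cSup_upper)
    finally show ?thesis unfolding opnorm_def M_def .
  qed
  show ?thesis
  proof (cases "nrm X0 \<xi> = 0")
    case True
    then have z: "\<xi> = (\<lambda>x. 0)" using nrm_zero_imp xi by blast
    have e1: "(\<lambda>x. (0::complex) * \<xi> x) = \<xi>" using z by simp
    have "T (\<lambda>x. 0 * \<xi> x) = (\<lambda>x. 0 * T \<xi> x)" by (rule bops_scale[OF T xi])
    then have t0: "T \<xi> = (\<lambda>x. 0)" unfolding e1 by simp
    have "A (\<lambda>x. 0 * \<xi> x) = (\<lambda>x. 0 * A \<xi> x)" by (rule bops_scale[OF A xi])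
    then have a0: "A \<xi> = (\<lambda>x. 0)" unfolding e1 by simp
    show ?thesis using t0 a0 True by simp
  next
    case False
    then have np: "nrm X0 \<xi> > 0" using nrm_nonneg order_le_less by metis
    define c where "c = complex_of_real (1 / nrm X0 \<xi>)"
    define \<eta> where "\<eta> = (\<lambda>x. c * \<xi> x)"
    have eta: "\<eta> \<in> l2 X0" unfolding \<eta>_def by (rule l2_scale[OF xi])
    have ne: "nrm X0 \<eta> = 1"
    proof -
      have "nrm X0 \<eta> = cmod c * nrm X0 \<xi>" unfolding \<eta>_def by (rule nrm_scale[OF xi])
      also have "cmod c = 1 / nrm X0 \<xi>" using np unfolding c_def by (simp only: norm_of_real) simp
      finally show ?thesis using np by simp
    qed
    have "S \<eta> x = c * S \<xi> x"
      unfolding S_def \<eta>_def using bops_scale[OF T xi] bops_scale[OF A xi] by (simp add: right_diff_distrib)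
    then have "cmod (S \<eta> x) = cmod c * cmod (S \<xi> x)" by (simp add: norm_mult)
    also have "cmod c = 1 / nrm X0 \<xi>" using np unfolding c_def by (simp only: norm_of_real) simp
    finally have "cmod (S \<xi> x) = nrm X0 \<xi> * cmod (S \<eta> x)" using np by simp
    also have "\<dots> \<le> nrm X0 \<xi> * opnorm X0 S" using unit[OF eta] ne np by (intro mult_left_mono) auto
    finally show ?thesis by (simp add: S_def mult.commute)
  qed
qed

lemma C0_cont: "f \<in> C0 X \<Longrightarrow> continuous_on X f" by (simp add: C0_def)

lemma C0_small: "f \<in> C0 X \<Longrightarrow> e > 0 \<Longrightarrow> \<exists>K. compact K \<and> K \<subseteq> X \<and> (\<forall>x\<in>X - K. cmod (f x) < e)"
  by (simp add: C0_def)

lemma C0_bounded: assumes "f \<in> C0 X" shows "\<exists>B\<ge>0. \<forall>x\<in>X. cmod (f x) \<le> B"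
proof -
  obtain K where K: "compact K" "K \<subseteq> X" "\<forall>x\<in>X - K. cmod (f x) < 1"
    using C0_small[OF assms, of 1] by auto
  have "compact (f ` K)"
    by (rule compact_continuous_image[OF continuous_on_subset[OF C0_cont[OF assms] K(2)] K(1)])
  then obtain M where M: "\<forall>y\<in>f ` K. norm y \<le> M" using compact_imp_bounded bounded_iff by metis
  have "\<forall>x\<in>X. cmod (f x) \<le> max M 1"
  proof
    fix x assume "x \<in> X"
    show "cmod (f x) \<le> max M 1"
    proof (cases "x \<in> K")
      case True then show ?thesis using M by (meson image_eqI max.coboundedI1)
    next
      case False then show ?thesis using K(3) \<open>x \<in> X\<close> by (meson DiffI less_imp_le max.coboundedI2)
    qed
  qed
  then show ?thesis by (intro exI[of _ "max M 1"]) auto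
qed

lemma C0_dom:
  assumes f: "f \<in> C0 X" and g: "continuous_on X g" and le: "\<forall>x\<in>X. cmod (g x) \<le> c * cmod (f x)" and c: "c > 0"
  shows "g \<in> C0 X"
  unfolding C0_def
proof (intro CollectI conjI g allI impI)
  fix e :: real assume e: "e > 0"
  obtain K where K: "compact K" "K \<subseteq> X" "\<forall>x\<in>X - K. cmod (f x) < e / c"
    using C0_small[OF f, of "e / c"] e c by auto
  have "\<forall>x\<in>X - K. cmod (g x) < e"
  proof
    fix x assume x: "x \<in> X - K"
    have "cmod (g x) \<le> c * cmod (f x)" using le x by blast
    also have "\<dots> < c * (e / c)" using K(3) x c by (intro mult_strict_left_mono) auto
    finally show "cmod (g x) < e" using c by simp
  qed
  then show "\<exists>K. compact K \<and> K \<subseteq> X \<and> (\<forall>x\<in>X - K. cmod (g x) < e)" using K by blast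
qed

lemma C0_add:
  assumes f: "f \<in> C0 X" and g: "g \<in> C0 X" shows "(\<lambda>x. f x + g x) \<in> C0 X"
  unfolding C0_def
proof (intro CollectI conjI allI impI)
  show "continuous_on X (\<lambda>x. f x + g x)" using C0_cont[OF f] C0_cont[OF g] by (intro continuous_intros)
  fix e :: real assume e: "e > 0"
  obtain K1 where K1: "compact K1" "K1 \<subseteq> X" "\<forall>x\<in>X - K1. cmod (f x) < e / 2"
    using C0_small[OF f, of "e / 2"] e by auto
  obtain K2 where K2: "compact K2" "K2 \<subseteq> X" "\<forall>x\<in>X - K2. cmod (g x) < e / 2"
    using C0_small[OF g, of "e / 2"] e by auto
  have "\<forall>x\<in>X - (K1 \<union> K2). cmod (f x + g x) < e"
  proof
    fix x assume x: "x \<in> X - (K1 \<union> K2)"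
    have "cmod (f x + g x) \<le> cmod (f x) + cmod (g x)" by (rule norm_triangle_ineq)
    also have "\<dots> < e / 2 + e / 2" using K1(3) K2(3) x by (intro add_strict_mono) auto
    finally show "cmod (f x + g x) < e" by simp
  qed
  then show "\<exists>K. compact K \<and> K \<subseteq> X \<and> (\<forall>x\<in>X - K. cmod (f x + g x) < e)"
    using K1 K2 by (intro exI[of _ "K1 \<union> K2"]) auto
qed

lemma C0_zero: "(\<lambda>x. 0) \<in> C0 X"
  unfolding C0_def by (auto intro!: exI[of _ "{}"])

lemma C0_scale: "f \<in> C0 X \<Longrightarrow> (\<lambda>x. c * f x) \<in> C0 X"
proof (cases "c = 0")
  case True then show ?thesis using C0_zero by simp
next
  case False
  assume f: "f \<in> C0 X"
  show ?thesis
    by (rule C0_dom[OF f _ _ , of _ "cmod c"]) (use False C0_cont[OF f] in \<open>auto intro!: continuous_intros simp: norm_mult\<close>)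
qed

lemma C0_diff: "f \<in> C0 X \<Longrightarrow> g \<in> C0 X \<Longrightarrow> (\<lambda>x. f x - g x) \<in> C0 X"
  using C0_add[of f X "\<lambda>x. (-1) * g x"] C0_scale[of g X "-1"] by simp

lemma C0_sum: "(\<And>i. i < (n::nat) \<Longrightarrow> f i \<in> C0 X) \<Longrightarrow> (\<lambda>x. \<Sum>i<n. f i x) \<in> C0 X"
proof (induction n)
  case 0 then show ?case using C0_zero by simp
next
  case (Suc n)
  then have "(\<lambda>x. (\<Sum>i<n. f i x) + f n x) \<in> C0 X" by (intro C0_add) auto
  then show ?case by simp
qed

lemma C0_mult_bounded:
  assumes f: "f \<in> C0 X" and g: "continuous_on X g" and B: "\<forall>x\<in>X. cmod (g x) \<le> B"
  shows "(\<lambda>x. f x * g x) \<in> C0 X"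
proof (rule C0_dom[OF f, of _ "max B 1"])
  show "continuous_on X (\<lambda>x. f x * g x)" using C0_cont[OF f] g by (intro continuous_intros)
  show "\<forall>x\<in>X. cmod (f x * g x) \<le> max B 1 * cmod (f x)"
  proof
    fix x assume "x \<in> X"
    have "cmod (f x * g x) = cmod (g x) * cmod (f x)" by (simp add: norm_mult)
    also have "\<dots> \<le> max B 1 * cmod (f x)" using B \<open>x \<in> X\<close> by (intro mult_right_mono) auto
    finally show "cmod (f x * g x) \<le> max B 1 * cmod (f x)" .
  qed
qed simp


definition clamp :: "real \<Rightarrow> complex \<Rightarrow> complex" where
  "clamp c z = z * complex_of_real (c / max c (cmod z))"

lemma clamp_norm: assumes "c > 0" shows "cmod (clamp c z) = cmod z * (c / max c (cmod z))"
proof -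
  have "c / max c (cmod z) \<ge> 0" using assms by simp
  then have "\<bar>c / max c (cmod z)\<bar> = c / max c (cmod z)" by (rule abs_of_nonneg)
  then show ?thesis unfolding clamp_def norm_mult norm_of_real by (simp only:)
qed

lemma clamp_le_c: assumes "c > 0" shows "cmod (clamp c z) \<le> c"
proof -
  have m: "max c (cmod z) > 0" using assms by simp
  have "cmod z * (c / max c (cmod z)) = c * (cmod z / max c (cmod z))" by simp
  also have "\<dots> \<le> c * 1" using m assms by (intro mult_left_mono) (auto simp: divide_le_eq_1)
  finally show ?thesis using clamp_norm[OF assms] by simp
qed

lemma clamp_le_z: assumes "c > 0" shows "cmod (clamp c z) \<le> cmod z"
proof -
  have m: "max c (cmod z) > 0" using assms by simp
  have "c / max c (cmod z) \<le> 1" using m by (simp add: divide_le_eq_1)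
  then have "cmod z * (c / max c (cmod z)) \<le> cmod z * 1" by (intro mult_left_mono) auto
  then show ?thesis using clamp_norm[OF assms] by simp
qed

lemma clamp_id: "c > 0 \<Longrightarrow> cmod z \<le> c \<Longrightarrow> clamp c z = z"
  by (simp add: clamp_def max_def)

lemma clamp_cont: assumes "c > 0" "continuous_on X g" shows "continuous_on X (\<lambda>x. clamp c (g x))"
proof -
  have "\<forall>x. max c (cmod (g x)) \<noteq> 0" using assms(1) by (metis max.cobounded1 not_le order.strict_trans2 less_irrefl)
  then show ?thesis unfolding clamp_def using assms(2) by (intro continuous_intros) auto
qed

lemma C0_ext:
  assumes hs: "\<And>k. hs k \<in> C0 X" and X0: "X0 \<subseteq> X"
    and conv: "\<And>k x. x \<in> X0 \<Longrightarrow> cmod (F x - hs k x) \<le> (1/2)^k"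
  shows "\<exists>h\<in>C0 X. \<forall>x\<in>X0. h x = F x"
proof -
  define c where "c k = 2 * (1/2::real)^k" for k
  have cpos: "c k > 0" for k by (simp add: c_def)
  define d where "d k x = clamp (c k) (hs (Suc k) x - hs k x)" for k x
  have dC0: "d k \<in> C0 X" for k
  proof (rule C0_dom[OF C0_diff[OF hs hs], of _ 1])
    show "continuous_on X (d k)" unfolding d_def
      by (intro clamp_cont cpos continuous_intros C0_cont[OF hs])
    show "\<forall>x\<in>X. cmod (d k x) \<le> 1 * cmod (hs (Suc k) x - hs k x)"
      using clamp_le_z[OF cpos] by (simp add: d_def)
  qed simp
  have dle: "cmod (d k x) \<le> c k" for k x unfolding d_def by (rule clamp_le_c[OF cpos])
  have dX0: "d k x = hs (Suc k) x - hs k x" if x: "x \<in> X0" for k x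
  proof -
    have e: "hs (Suc k) x - hs k x = (F x - hs k x) - (F x - hs (Suc k) x)" by simp
    have "cmod (hs (Suc k) x - hs k x) \<le> cmod (F x - hs k x) + cmod (F x - hs (Suc k) x)"
      unfolding e by (rule norm_triangle_ineq4)
    also have "\<dots> \<le> (1/2)^k + (1/2)^Suc k" by (intro add_mono conv[OF x])
    also have "\<dots> \<le> c k" by (simp add: c_def)
    finally show ?thesis unfolding d_def by (rule clamp_id[OF cpos])
  qed
  have summ: "summable c" unfolding c_def by (intro summable_mult summable_geometric) simp
  have W: "uniform_limit X (\<lambda>n x. \<Sum>i<n. d i x) (\<lambda>x. suminf (\<lambda>i. d i x)) sequentially"
    by (rule Weierstrass_m_test[OF _ summ]) (rule dle)
  define H where "H n x = hs 0 x + (\<Sum>i<n. d i x)" for n x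
  define h where "h x = hs 0 x + suminf (\<lambda>i. d i x)" for x
  have UL: "uniform_limit X H h sequentially"
  proof (rule uniform_limitI)
    fix e :: real assume "e > 0"
    then have "\<forall>\<^sub>F n in sequentially. \<forall>x\<in>X. dist (\<Sum>i<n. d i x) (suminf (\<lambda>i. d i x)) < e"
      using uniform_limitD[OF W] by blast
    then show "\<forall>\<^sub>F n in sequentially. \<forall>x\<in>X. dist (H n x) (h x) < e"
      by (rule eventually_mono) (simp add: H_def h_def)
  qed
  have HC0: "H n \<in> C0 X" for n
  proof -
    have "(\<lambda>x. hs 0 x + (\<Sum>i<n. d i x)) \<in> C0 X" by (intro C0_add hs C0_sum dC0)
    then show ?thesis by (simp add: H_def[abs_def])
  qed
  have hcont: "continuous_on X h"
    by (rule uniform_limit_theorem[OF _ UL]) (simp_all add: C0_cont[OF HC0])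
  have hC0: "h \<in> C0 X"
    unfolding C0_def
  proof (intro CollectI conjI hcont allI impI)
    fix e :: real assume e: "e > 0"
    then have "\<forall>\<^sub>F n in sequentially. \<forall>x\<in>X. dist (H n x) (h x) < e / 2"
      using uniform_limitD[OF UL, of "e/2"] by simp
    then obtain n where n: "\<forall>x\<in>X. dist (H n x) (h x) < e / 2"
      unfolding eventually_sequentially by blast
    obtain K where K: "compact K" "K \<subseteq> X" "\<forall>x\<in>X - K. cmod (H n x) < e / 2"
      using C0_small[OF HC0, of "e/2" n] e by auto
    have "\<forall>x\<in>X - K. cmod (h x) < e"
    proof
      fix x assume x: "x \<in> X - K"
      have e2: "h x = H n x - (H n x - h x)" by simp
      have "cmod (h x) \<le> cmod (H n x) + cmod (H n x - h x)"
        by (subst e2) (rule norm_triangle_ineq4)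
      also have "cmod (H n x - h x) = dist (H n x) (h x)" by (simp add: dist_norm)
      finally have "cmod (h x) \<le> cmod (H n x) + dist (H n x) (h x)" .
      also have "\<dots> < e / 2 + e / 2" using K(3) n x by (intro add_strict_mono) auto
      finally show "cmod (h x) < e" by simp
    qed
    then show "\<exists>K. compact K \<and> K \<subseteq> X \<and> (\<forall>x\<in>X - K. cmod (h x) < e)" using K by blast
  qed
  have "h x = F x" if x: "x \<in> X0" for x
  proof -
    have xX: "x \<in> X" using x X0 by blast
    have Hn: "H n x = hs n x" for n
    proof -
      have "(\<Sum>i<n. d i x) = (\<Sum>i<n. hs (Suc i) x - hs i x)" using dX0[OF x] by simp
      also have "\<dots> = hs n x - hs 0 x" by (rule sum_lessThan_telescope)
      finally show ?thesis by (simp add: H_def)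
    qed
    have t1: "(\<lambda>n. hs n x) \<longlonglongrightarrow> h x" using tendsto_uniform_limitI[OF UL xX] Hn by simp
    have t2: "(\<lambda>n. hs n x) \<longlonglongrightarrow> F x"
    proof (rule Lim_transform[OF tendsto_const])
      have lim0: "(\<lambda>n. (1/2::real)^n) \<longlonglongrightarrow> 0" by (rule LIMSEQ_power_zero) simp
      have bd: "\<forall>n. norm (hs n x - F x) \<le> (1/2)^n" using conv[OF x] by (simp add: norm_minus_commute)
      show "(\<lambda>n. hs n x - F x) \<longlonglongrightarrow> 0"
        by (rule Lim_null_comparison[OF always_eventually[OF bd] lim0])
    qed
    show ?thesis using LIMSEQ_unique[OF t1 t2] .
  qed
  then show ?thesis using hC0 by blast
qed

context mopl begin

lemma closure_sub:
  assumes X0: "X0 \<subseteq> X" and T: "T \<in> bops X0"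
    and approx: "\<And>e. e > 0 \<Longrightarrow> \<exists>h\<in>C0 X. opnorm X0 (\<lambda>\<xi> x. T \<xi> x - mop X0 \<phi> h \<xi> x) < e"
  shows "\<exists>h\<in>C0 X. T = mop X0 \<phi> h"
proof -
  have "\<forall>k. \<exists>h. h \<in> C0 X \<and> opnorm X0 (\<lambda>\<xi> x. T \<xi> x - mop X0 \<phi> h \<xi> x) < (1/2)^k"
  proof
    fix k :: nat
    have "(1/2::real)^k > 0" by simp
    then show "\<exists>h. h \<in> C0 X \<and> opnorm X0 (\<lambda>\<xi> x. T \<xi> x - mop X0 \<phi> h \<xi> x) < (1/2)^k"
      using approx[of "(1/2)^k"] by blast
  qed
  from choice[OF this] obtain hs where hs0: "\<forall>k. hs k \<in> C0 X \<and> opnorm X0 (\<lambda>\<xi> x. T \<xi> x - mop X0 \<phi> (hs k) \<xi> x) < (1/2)^k"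
    by blast
  have hs: "\<And>k. hs k \<in> C0 X" "\<And>k. opnorm X0 (\<lambda>\<xi> x. T \<xi> x - mop X0 \<phi> (hs k) \<xi> x) < (1/2)^k"
    using hs0 by auto
  have bnd: "\<exists>B\<ge>0. \<forall>x\<in>X0. cmod (hs k x) \<le> B" for k
    using C0_bounded[OF hs(1)] X0 by blast
  have A: "mop X0 \<phi> (hs k) \<in> bops X0" for k
    using bnd[of k] mop_bops by blast
  have key: "cmod (T \<xi> x - hs k x * \<xi> (\<phi> x)) \<le> (1/2)^k * nrm X0 \<xi>"
    if xi: "\<xi> \<in> l2 X0" and x: "x \<in> X0" for \<xi> x k
  proof -
    have "cmod (T \<xi> x - mop X0 \<phi> (hs k) \<xi> x) \<le> opnorm X0 (\<lambda>\<xi> x. T \<xi> x - mop X0 \<phi> (hs k) \<xi> x) * nrm X0 \<xi>"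
      by (rule opdiff_le[OF T A xi x])
    also have "\<dots> \<le> (1/2)^k * nrm X0 \<xi>" using hs(2)[of k] nrm_nonneg by (intro mult_right_mono) auto
    finally show ?thesis using xi x by (simp add: mop_def)
  qed
  define F where "F x = T (delta (\<phi> x)) x" for x
  have conv: "cmod (F x - hs k x) \<le> (1/2)^k" if x: "x \<in> X0" for k x
  proof -
    have px: "\<phi> x \<in> X0" using inv x by blast
    have "cmod (T (delta (\<phi> x)) x - hs k x * delta (\<phi> x) (\<phi> x)) \<le> (1/2)^k * nrm X0 (delta (\<phi> x))"
      by (rule key[OF delta_l2(1)[OF px] x])
    then show ?thesis using delta_l2(2)[OF px] by (simp add: F_def delta_def)
  qed
  obtain h where h: "h \<in> C0 X" "\<And>x. x \<in> X0 \<Longrightarrow> h x = F x"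
    using C0_ext[OF hs(1) X0 conv] by blast
  have "T = mop X0 \<phi> h"
  proof
    fix \<xi>
    show "T \<xi> = mop X0 \<phi> h \<xi>"
    proof (cases "\<xi> \<in> l2 X0")
      case False
      then show ?thesis using T by (simp add: bops_def mop_def)
    next
      case xi: True
      show ?thesis
      proof
        fix x
        show "T \<xi> x = mop X0 \<phi> h \<xi> x"
        proof (cases "x \<in> X0")
          case False
          then show ?thesis using l2_D[OF bops_l2[OF T xi] False] xi by (simp add: mop_def)
        next
          case x: True
          have "cmod (T \<xi> x - h x * \<xi> (\<phi> x)) \<le> 0"
          proof (rule half_pow_le0, intro allI)
            fix k
            have e3: "T \<xi> x - h x * \<xi> (\<phi> x) = (T \<xi> x - hs k x * \<xi> (\<phi> x)) + (hs k x - h x) * \<xi> (\<phi> x)"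
              by (simp add: algebra_simps)
            have "cmod (T \<xi> x - h x * \<xi> (\<phi> x)) \<le> cmod (T \<xi> x - hs k x * \<xi> (\<phi> x)) + cmod ((hs k x - h x) * \<xi> (\<phi> x))"
              by (subst e3) (rule norm_triangle_ineq)
            also have "\<dots> \<le> (1/2)^k * nrm X0 \<xi> + (1/2)^k * cmod (\<xi> (\<phi> x))"
            proof (intro add_mono key[OF xi x])
              have "cmod (hs k x - h x) = cmod (F x - hs k x)" using h(2)[OF x] by (simp add: norm_minus_commute)
              also have "\<dots> \<le> (1/2)^k" by (rule conv[OF x])
              finally show "cmod ((hs k x - h x) * \<xi> (\<phi> x)) \<le> (1/2)^k * cmod (\<xi> (\<phi> x))"
                by (simp add: norm_mult mult_right_mono)
            qed
            finally show "cmod (T \<xi> x - h x * \<xi> (\<phi> x)) \<le> (nrm X0 \<xi> + cmod (\<xi> (\<phi> x))) * (1/2)^k"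
              by (simp add: algebra_simps)
          qed
          then show ?thesis using xi x by (simp add: mop_def)
        qed
      qed
    qed
  qed
  then show ?thesis using h(1) by blast
qed

end

locale ratX = ratl +
  fixes X :: "pt set"
  assumes Xc: "X = julia (ratmap p q) \<or> X = fatou (ratmap p q) \<or> X = S2"
begin

abbreviation "X0 \<equiv> Xcirc R X"

lemma X_S2: "X \<subseteq> S2"
  using Xc fatou_S2 by (auto simp: julia_def)

lemma X_inv: assumes x: "x \<in> X" shows "R x \<in> X"
proof -
  consider "X = julia R" | "X = fatou R" | "X = S2" using Xc by blast
  then show ?thesis
  proof cases
    case 1 then show ?thesis using julia_fwd x by simp
  next
    case 2 then show ?thesis using fatou_fwd x by simp
  next
    case 3 then show ?thesis using R_S2 by simp
  qed
qed

lemma Xn_inv: "x \<in> X \<Longrightarrow> (R ^^ n) x \<in> X"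
  by (induction n) (auto simp: X_inv)

lemma X0_sub: "X0 \<subseteq> X" by (auto simp: Xcirc_def)

lemma X0_inv: assumes x: "x \<in> X0" shows "R x \<in> X0"
proof -
  have xX: "x \<in> X" using x X0_sub by blast
  have nr: "\<not> (\<exists>y \<in> fixed_pts R X \<union> branch_pts R X. \<exists>m n. (R ^^ m) x = (R ^^ n) y)"
    using x by (simp add: Xcirc_def)
  have "\<not> (\<exists>y \<in> fixed_pts R X \<union> branch_pts R X. \<exists>m n. (R ^^ m) (R x) = (R ^^ n) y)"
  proof
    assume "\<exists>y \<in> fixed_pts R X \<union> branch_pts R X. \<exists>m n. (R ^^ m) (R x) = (R ^^ n) y"
    then obtain y m n where y: "y \<in> fixed_pts R X \<union> branch_pts R X" "(R ^^ m) (R x) = (R ^^ n) y" by blast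
    have "(R ^^ Suc m) x = (R ^^ n) y" using y(2) by (simp only: funpow_Suc_right comp_apply)
    then show False using nr y(1) by blast
  qed
  then show ?thesis using X_inv[OF xX] by (simp add: Xcirc_def)
qed

lemma X0n_inv: "x \<in> X0 \<Longrightarrow> (R ^^ n) x \<in> X0"
  by (induction n) (auto simp: X0_inv)

lemma mopl_n: "mopl X0 (R ^^ n) ((d+1)^n)"
proof
  show "\<forall>x\<in>X0. (R ^^ n) x \<in> X0" using X0n_inv by blast
  show "\<forall>y. finite {x \<in> X0. (R ^^ n) x = y} \<and> card {x \<in> X0. (R ^^ n) x = y} \<le> (d + 1) ^ n"
  proof
    fix y
    have sub: "{x \<in> X0. (R ^^ n) x = y} \<subseteq> {x \<in> S2. (R ^^ n) x = y}" using X0_sub X_S2 by blast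
    have f: "finite {x \<in> S2. (R ^^ n) x = y}" using Rn_fiber by blast
    have "card {x \<in> X0. (R ^^ n) x = y} \<le> card {x \<in> S2. (R ^^ n) x = y}" by (rule card_mono[OF f sub])
    then show "finite {x \<in> X0. (R ^^ n) x = y} \<and> card {x \<in> X0. (R ^^ n) x = y} \<le> (d + 1) ^ n"
      using Rn_fiber[of n y] finite_subset[OF sub f] by linarith
  qed
qed

lemma Rn_contX: "continuous_on X (R ^^ n)"
  using Rn_cont X_S2 continuous_on_subset by blast

lemma C0_bnd0: "f \<in> C0 X \<Longrightarrow> \<exists>B\<ge>0. \<forall>x\<in>X0. cmod (f x) \<le> B"
  using C0_bounded X0_sub by blast

lemma rho_bops: "f \<in> C0 X \<Longrightarrow> rho R X n f \<in> bops X0"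
  unfolding rho_mop using C0_bnd0 mopl.mop_bops[OF mopl_n] by blast

lemma comp_C0:
  assumes f: "f \<in> C0 X" and g: "g \<in> C0 X" shows "(\<lambda>x. f x * g ((R ^^ m) x)) \<in> C0 X"
proof -
  have c: "continuous_on X (\<lambda>x. g ((R ^^ m) x))"
    by (rule continuous_on_compose2[OF C0_cont[OF g] Rn_contX]) (use Xn_inv in auto)
  obtain B where B: "B \<ge> 0" "\<forall>x\<in>X. cmod (g x) \<le> B" using C0_bounded[OF g] by blast
  have b: "\<forall>x\<in>X. cmod (g ((R ^^ m) x)) \<le> B" using B Xn_inv by blast
  show ?thesis by (rule C0_mult_bounded[OF f c b])
qed

lemma prod_eq:
  assumes f: "f \<in> C0 X" and g: "g \<in> C0 X"
  shows "rho R X m f \<circ> rho R X n g = rho R X (m + n) (\<lambda>x. f x * g ((R ^^ m) x))"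
proof
  fix \<xi>
  show "(rho R X m f \<circ> rho R X n g) \<xi> = rho R X (m + n) (\<lambda>x. f x * g ((R ^^ m) x)) \<xi>"
  proof (cases "\<xi> \<in> l2 X0")
    case False
    then show ?thesis by (simp add: rho_mop mop_def zero_l2 fun_eq_iff)
  next
    case True
    obtain B where B: "\<forall>x\<in>X0. cmod (g x) \<le> B" using C0_bnd0[OF g] by blast
    have l: "rho R X n g \<xi> \<in> l2 X0" unfolding rho_mop by (rule mopl.mop_l2[OF mopl_n True B])
    have e: "(R ^^ n) ((R ^^ m) x) = (R ^^ (m + n)) x" for x
      by (simp only: add.commute[of m n] funpow_add comp_apply)
    show ?thesis
    proof
      fix x
      show "(rho R X m f \<circ> rho R X n g) \<xi> x = rho R X (m + n) (\<lambda>x. f x * g ((R ^^ m) x)) \<xi> x"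
        using l True X0n_inv[of x m] e[of x] by (simp add: rho_mop mop_def)
    qed
  qed
qed

lemma X_loc: "compact X \<or> openin (top_of_set S2) X"
proof -
  have cS2: "compact S2" by (simp add: S2_def)
  consider "X = julia R" | "X = fatou R" | "X = S2" using Xc by blast
  then show ?thesis
  proof cases
    case 1
    have "X = S2 \<inter> julia R" using 1 by (auto simp: julia_def)
    then have "compact X" using compact_Int_closed[OF cS2 julia_closed] by simp
    then show ?thesis by blast
  next
    case 2 then show ?thesis using fatou_openin by simp
  next
    case 3 then show ?thesis using cS2 by simp
  qed
qed

lemma urys:
  assumes M: "compact M" "M \<subseteq> X"
  shows "\<exists>g\<in>C0 X. (\<forall>y\<in>M. g y = 1) \<and> (\<forall>y\<in>X. cmod (g y) \<le> 1)"
proof (cases "compact X")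
  case True
  have "(\<lambda>y. 1) \<in> C0 X" unfolding C0_def using True by (auto intro!: exI[of _ X])
  then show ?thesis by auto
next
  case False
  then have XO: "openin (top_of_set S2) X" using X_loc by blast
  show ?thesis
  proof (cases "M = {}")
    case True
    show ?thesis by (rule bexI[of _ "\<lambda>x. 0"]) (simp_all add: True C0_zero)
  next
    case Mne: False
    obtain T where T: "open T" "X = S2 \<inter> T" using XO openin_open by metis
    have MT: "M \<subseteq> T" using M(2) T by blast
    obtain \<delta> where \<delta>: "\<delta> > 0" "\<And>y. infdist y M \<le> \<delta> \<Longrightarrow> y \<in> T"
    proof (cases "- T = {}")
      case True then show ?thesis using that[of 1] by auto
    next
      case Cne: False
      have cC: "closed (- T)" using T(1) by (simp add: closed_Compl)
      obtain a b where ab: "a \<in> M" "b \<in> - T" "dist a b = setdist M (- T)"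
        using setdist_compact_closed[OF M(1) cC Mne Cne] by blast
      have "a \<noteq> b" using ab MT by blast
      then have sp: "setdist M (- T) > 0" using ab(3) by (metis zero_less_dist_iff)
      show ?thesis
      proof (rule that[of "setdist M (- T) / 2"])
        show "setdist M (- T) / 2 > 0" using sp by simp
        fix y assume y: "infdist y M \<le> setdist M (- T) / 2"
        show "y \<in> T"
        proof (rule ccontr)
          assume "y \<notin> T"
          then have "setdist (- T) M \<le> setdist {y} M" by (intro setdist_le_sing) simp
          then have "setdist M (- T) \<le> infdist y M" by (simp add: setdist_sym infdist_eq_setdist)
          then show False using y sp by simp
        qed
      qed
    qed
    define g where "g y = complex_of_real (max 0 (1 - infdist y M / \<delta>))" for y
    have gc: "continuous_on X g" unfolding g_def using \<delta>(1) by (intro continuous_intros) auto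
    have g1: "\<forall>y\<in>M. g y = 1" by (simp add: g_def)
    have gle: "\<forall>y\<in>X. cmod (g y) \<le> 1"
    proof
      fix y
      have "max 0 (1 - infdist y M / \<delta>) \<le> 1" using \<delta>(1) infdist_nonneg[of y M] by simp
      moreover have "max 0 (1 - infdist y M / \<delta>) \<ge> 0" by simp
      ultimately show "cmod (g y) \<le> 1" unfolding g_def by (simp only: norm_of_real)
    qed
    have "g \<in> C0 X" unfolding C0_def
    proof (intro CollectI conjI gc allI impI)
      fix e :: real assume e: "e > 0"
      define K where "K = S2 \<inter> {y. infdist y M \<le> \<delta>}"
      have "closed {y. infdist y M \<le> \<delta>}"
        by (rule closed_Collect_le) (intro continuous_intros)+
      then have cK: "compact K" unfolding K_def by (intro compact_Int_closed) (simp_all add: S2_def)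
      have KX: "K \<subseteq> X" using T \<delta>(2) by (auto simp: K_def)
      have "\<forall>y\<in>X - K. cmod (g y) < e"
      proof
        fix y assume "y \<in> X - K"
        then have "infdist y M > \<delta>" using T by (auto simp: K_def)
        then have "1 - infdist y M / \<delta> < 0" using \<delta>(1) by (simp add: field_simps)
        then show "cmod (g y) < e" using e by (simp add: g_def max_def)
      qed
      then show "\<exists>K. compact K \<and> K \<subseteq> X \<and> (\<forall>x\<in>X - K. cmod (g x) < e)" using cK KX by blast
    qed
    then show ?thesis using g1 gle by blast
  qed
qed

end

lemma op_closure_mono: "S \<subseteq> S' \<Longrightarrow> op_closure X0 S \<subseteq> op_closure X0 S'"
  unfolding op_closure_def by blast

context ratX begin

lemma closure_eq:
  "op_closure X0 (prodset (Eset R X m) (Eset R X n)) = Eset R X (m + n)"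
proof
  show "op_closure X0 (prodset (Eset R X m) (Eset R X n)) \<subseteq> Eset R X (m + n)"
  proof
    fix T assume T: "T \<in> op_closure X0 (prodset (Eset R X m) (Eset R X n))"
    then have Tb: "T \<in> bops X0" by (simp add: op_closure_def)
    have approx: "\<exists>h\<in>C0 X. opnorm X0 (\<lambda>\<xi> x. T \<xi> x - mop X0 (R ^^ (m + n)) h \<xi> x) < e" if e: "e > 0" for e
    proof -
      obtain A where A: "A \<in> prodset (Eset R X m) (Eset R X n)" "opnorm X0 (\<lambda>\<xi> x. T \<xi> x - A \<xi> x) < e"
        using T e unfolding op_closure_def by blast
      then obtain f g where fg: "f \<in> C0 X" "g \<in> C0 X" "A = rho R X m f \<circ> rho R X n g"
        unfolding prodset_def Eset_def by blast
      have "A = mop X0 (R ^^ (m + n)) (\<lambda>x. f x * g ((R ^^ m) x))"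
        using prod_eq[OF fg(1,2)] fg(3) by (simp add: rho_mop)
      then show ?thesis using A(2) comp_C0[OF fg(1,2)] by blast
    qed
    obtain h where h: "h \<in> C0 X" "T = mop X0 (R ^^ (m + n)) h"
      using mopl.closure_sub[OF mopl_n X0_sub Tb approx] by blast
    then show "T \<in> Eset R X (m + n)" by (simp add: Eset_def rho_mop)
  qed
next
  show "Eset R X (m + n) \<subseteq> op_closure X0 (prodset (Eset R X m) (Eset R X n))"
  proof
    fix T assume "T \<in> Eset R X (m + n)"
    then obtain h where h: "h \<in> C0 X" "T = rho R X (m + n) h" by (auto simp: Eset_def)
    have Tb: "T \<in> bops X0" using rho_bops h by simp
    define s where "s = sqrt (real ((d+1)^(m+n)))"
    have s0: "s \<ge> 0" by (simp add: s_def)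
    have "\<exists>A\<in>prodset (Eset R X m) (Eset R X n). opnorm X0 (\<lambda>\<xi> x. T \<xi> x - A \<xi> x) < e" if e: "e > 0" for e
    proof -
      define e' where "e' = e / (2 * (s + 1))"
      have e'0: "e' > 0" using e s0 by (simp add: e'_def)
      obtain K where K: "compact K" "K \<subseteq> X" "\<forall>x\<in>X - K. cmod (h x) < e'"
        using C0_small[OF h(1) e'0] by blast
      have cM: "compact ((R ^^ m) ` K)"
        using compact_continuous_image[OF continuous_on_subset[OF Rn_contX K(2)] K(1)] .
      have MX: "(R ^^ m) ` K \<subseteq> X" using K(2) Xn_inv by blast
      obtain g where g: "g \<in> C0 X" "\<forall>y\<in>(R ^^ m) ` K. g y = 1" "\<forall>y\<in>X. cmod (g y) \<le> 1"
        using urys[OF cM MX] by blast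
      define A where "A = rho R X m h \<circ> rho R X n g"
      have Ap: "A \<in> prodset (Eset R X m) (Eset R X n)"
        unfolding A_def prodset_def Eset_def using h(1) g(1) by blast
      define k where "k x = h x - h x * g ((R ^^ m) x)" for x
      have diff: "(\<lambda>\<xi> x. T \<xi> x - A \<xi> x) = mop X0 (R ^^ (m + n)) k"
      proof -
        have "A = mop X0 (R ^^ (m + n)) (\<lambda>x. h x * g ((R ^^ m) x))"
          using prod_eq[OF h(1) g(1)] by (simp add: A_def rho_mop)
        then show ?thesis using h(2)
          by (auto simp: rho_mop mop_def k_def fun_eq_iff left_diff_distrib)
      qed
      have kb: "\<forall>x\<in>X0. cmod (k x) \<le> 2 * e'"
      proof
        fix x assume "x \<in> X0"
        then have xX: "x \<in> X" using X0_sub by blast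
        show "cmod (k x) \<le> 2 * e'"
        proof (cases "x \<in> K")
          case True
          then have "g ((R ^^ m) x) = 1" using g(2) by blast
          then show ?thesis using e'0 by (simp add: k_def)
        next
          case False
          then have hx: "cmod (h x) < e'" using K(3) xX by blast
          have "k x = h x * (1 - g ((R ^^ m) x))" by (simp add: k_def algebra_simps)
          then have "cmod (k x) = cmod (h x) * cmod (1 - g ((R ^^ m) x))" by (simp add: norm_mult)
          also have "\<dots> \<le> e' * 2"
          proof (rule mult_mono)
            show "cmod (h x) \<le> e'" using hx by simp
            have "cmod (1 - g ((R ^^ m) x)) \<le> cmod (1::complex) + cmod (g ((R ^^ m) x))" by (rule norm_triangle_ineq4)
            also have "\<dots> \<le> 2" using g(3) Xn_inv[OF xX, of m] by simp
            finally show "cmod (1 - g ((R ^^ m) x)) \<le> 2" .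
          qed (use e'0 in auto)
          finally show ?thesis by simp
        qed
      qed
      have "opnorm X0 (\<lambda>\<xi> x. T \<xi> x - A \<xi> x) \<le> 2 * e' * s"
        unfolding diff s_def by (rule mopl.opnorm_mop_le[OF mopl_n kb]) (use e'0 in simp)
      also have "2 * e' * s < e"
      proof -
        have "2 * e' * s = e * (s / (s + 1))" using s0 by (simp add: e'_def field_simps)
        also have "\<dots> < e * 1" using e s0 by (intro mult_strict_left_mono) auto
        finally show ?thesis by simp
      qed
      finally show ?thesis using Ap by blast
    qed
    then show "T \<in> op_closure X0 (prodset (Eset R X m) (Eset R X n))"
      using Tb unfolding op_closure_def by blast
  qed
qed

lemma E_cstar: "Eset R X n \<subseteq> Cstar_rho R X"
  unfolding Cstar_rho_def cstar_gen_def
proof (rule Inter_greatest)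
  fix A assume "A \<in> {A. A \<subseteq> bops X0 \<and> Eset R X 0 \<union> Eset R X 1 \<subseteq> A \<and>
       (\<forall>T\<in>A. \<forall>S\<in>A. (\<lambda>\<xi> x. T \<xi> x + S \<xi> x) \<in> A) \<and>
       (\<forall>c. \<forall>T\<in>A. (\<lambda>\<xi> x. c * T \<xi> x) \<in> A) \<and>
       (\<forall>T\<in>A. \<forall>S\<in>A. T \<circ> S \<in> A) \<and>
       (\<forall>T\<in>A. \<exists>S\<in>A. is_adjoint X0 T S) \<and>
       op_closure X0 A \<subseteq> A}"
  then have G: "Eset R X 0 \<subseteq> A" "Eset R X 1 \<subseteq> A" and comp: "\<forall>T\<in>A. \<forall>S\<in>A. T \<circ> S \<in> A"
    and cl: "op_closure X0 A \<subseteq> A" by auto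
  show "Eset R X n \<subseteq> A"
  proof (induction n)
    case 0 then show ?case using G by simp
  next
    case (Suc n)
    have "prodset (Eset R X n) (Eset R X 1) \<subseteq> A"
      using Suc.IH G(2) comp unfolding prodset_def by blast
    then have "op_closure X0 (prodset (Eset R X n) (Eset R X 1)) \<subseteq> A"
      using op_closure_mono cl by blast
    then show ?case using closure_eq[of n 1] by simp
  qed
qed

end

theorem proposition3p2p4:
  fixes p q :: "complex poly" and X :: "(real \<times> complex) set"
  assumes "coprime p q"
    and "max (degree p) (degree q) \<ge> 2"
    and "X = julia (ratmap p q) \<or> X = fatou (ratmap p q) \<or> X = S2"
    and "X \<noteq> {}"
  shows "(\<forall>m n. op_closure (Xcirc (ratmap p q) X)
                   (prodset (Eset (ratmap p q) X m) (Eset (ratmap p q) X n))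
                 = Eset (ratmap p q) X (m + n))
       \<and> (\<forall>n. Eset (ratmap p q) X n \<subseteq> Cstar_rho (ratmap p q) X)"
proof -
  interpret ratX p q X
    by unfold_locales (use assms in auto)
  show ?thesis using closure_eq E_cstar by blast
qed


end
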